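(* Let $T$ be a metric tree with six leaves (unbounded legs), all of whose vertices have genus $0$. Then, up to isomorphism, there is exactly one metric graph $\Gamma$ of genus two with six legs together with a tropical hyperelliptic cover $\pi\colon\Gamma\to T$ (a harmonic map of degree two) that is branched at all six legs of $T$.
   Context: A metric graph is a connected graph with vertices $V$, edges $E$ and unbounded legs, with a genus function $g\colon V\to\mathbb{Z}_{\ge0}$ and positive lengths on edges (legs have infinite length); its genus is $b_1+\sum_v g(v)$, $b_1=|E|-|V|+1$. A morphism of metric graphs $\pi\colon\Gamma\to\Gamma'$ sends vertices to vertices and edges (legs) to edges (legs), linearly with integer slope $w(e)\in\mathbb{Z}_{>0}$ on each edge or leg $e$ (so $w(e)=\ell(\pi(e))/\ell(e)$). It is harmonic if for every vertex $v$ of $\Gamma$ the number $d_v=\sum_{e\ni v,\ \pi(e)=e'}w(e)$ is independent of the edge $e'$ adjacent to $\pi(v)$; the degree of $\pi$ is the sum of the $d_v$ over the fiber of any vertex. A tropical hyperelliptic cover of a genus-zero metric tree $T$ is a surjective degree-two harmonic map $\pi\colon\Gamma\to T$ satisfying, at every vertex $v$ of $\Gamma$, the local Riemann–Hurwitz condition $2-2g(v)=2d_v-\#\{e\ni v: w(e)=2\}$. A leg or edge of $T$ is a branch point if it is covered by a leg or edge of $\Gamma$ of weight $2$. *)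

theory Defs
  imports Complex_Main "HOL-Library.Multiset"
begin

text \<open>A metric graph: vertex set V, set E of (bounded) edges, set L of legs
(unbounded, infinite length).  For an edge e, ends e = (a,b) are its two endpoints
(loops allowed, a = b); for a leg l, fst (ends l) is the vertex it is attached to
(the second component is ignored).  len gives the positive lengths of edges;
gen is the genus function on vertices.\<close>

record ('v, 'e) mgraph =
  V :: "'v set"
  E :: "'e set"
  L :: "'e set"
  ends :: "'e \<Rightarrow> 'v \<times> 'v"
  len :: "'e \<Rightarrow> real"
  gen :: "'v \<Rightarrow> nat"

definition adj_rel :: "('v, 'e, 'x) mgraph_scheme \<Rightarrow> ('v \<times> 'v) set" where
  "adj_rel G = {(u, v). \<exists>e \<in> E G. ends G e = (u, v) \<or> ends G e = (v, u)}"

definition metric_graph :: "('v, 'e, 'x) mgraph_scheme \<Rightarrow> bool" where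
  "metric_graph G \<longleftrightarrow>
     finite (V G) \<and> V G \<noteq> {} \<and> finite (E G) \<and> finite (L G) \<and> E G \<inter> L G = {} \<and>
     (\<forall>e \<in> E G. fst (ends G e) \<in> V G \<and> snd (ends G e) \<in> V G \<and> len G e > 0) \<and>
     (\<forall>l \<in> L G. fst (ends G l) \<in> V G) \<and>
     (\<forall>u \<in> V G. \<forall>v \<in> V G. (u, v) \<in> (adj_rel G)\<^sup>*)"

definition graph_genus :: "('v, 'e, 'x) mgraph_scheme \<Rightarrow> int" where
  "graph_genus G = int (card (E G)) - int (card (V G)) + 1 + (\<Sum>v \<in> V G. int (gen G v))"

definition inc :: "('v, 'e, 'x) mgraph_scheme \<Rightarrow> 'v \<Rightarrow> 'e \<Rightarrow> nat" where
  "inc G v e =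
     (if e \<in> E G then (if fst (ends G e) = v then 1 else 0) + (if snd (ends G e) = v then 1 else 0)
      else if e \<in> L G then (if fst (ends G e) = v then 1 else 0) else 0)"

definition adjacent :: "('v, 'e, 'x) mgraph_scheme \<Rightarrow> 'v \<Rightarrow> 'e \<Rightarrow> bool" where
  "adjacent G v e \<longleftrightarrow> inc G v e > 0"

definition genus0_tree :: "('v, 'e, 'x) mgraph_scheme \<Rightarrow> bool" where
  "genus0_tree T \<longleftrightarrow> metric_graph T \<and> card (E T) + 1 = card (V T) \<and> (\<forall>v \<in> V T. gen T v = 0)"

text \<open>A morphism is given by a vertex map pV, an edge/leg map pE and the integer
slopes (weights) w on edges and legs.\<close>

definition morphism ::
  "('v, 'e, 'x) mgraph_scheme \<Rightarrow> ('u, 'f, 'y) mgraph_scheme \<Rightarrow>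
   ('v \<Rightarrow> 'u) \<Rightarrow> ('e \<Rightarrow> 'f) \<Rightarrow> ('e \<Rightarrow> nat) \<Rightarrow> bool" where
  "morphism G H pV pE w \<longleftrightarrow>
     (\<forall>v \<in> V G. pV v \<in> V H) \<and>
     (\<forall>e \<in> E G. pE e \<in> E H \<and> w e > 0 \<and>
        {# pV (fst (ends G e)), pV (snd (ends G e)) #} = {# fst (ends H (pE e)), snd (ends H (pE e)) #} \<and>
        len H (pE e) = real (w e) * len G e) \<and>
     (\<forall>l \<in> L G. pE l \<in> L H \<and> w l > 0 \<and> pV (fst (ends G l)) = fst (ends H (pE l)))"

definition local_deg ::
  "('v, 'e, 'x) mgraph_scheme \<Rightarrow> ('e \<Rightarrow> 'f) \<Rightarrow> ('e \<Rightarrow> nat) \<Rightarrow> 'v \<Rightarrow> 'f \<Rightarrow> nat" where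
  "local_deg G pE w v e' = (\<Sum>e \<in> E G \<union> L G. if pE e = e' then inc G v e * w e else 0)"

definition harmonic ::
  "('v, 'e, 'x) mgraph_scheme \<Rightarrow> ('u, 'f, 'y) mgraph_scheme \<Rightarrow>
   ('v \<Rightarrow> 'u) \<Rightarrow> ('e \<Rightarrow> 'f) \<Rightarrow> ('e \<Rightarrow> nat) \<Rightarrow> bool" where
  "harmonic G H pV pE w \<longleftrightarrow> morphism G H pV pE w \<and>
     (\<forall>v \<in> V G. \<forall>e1 \<in> E H \<union> L H. \<forall>e2 \<in> E H \<union> L H.
        adjacent H (pV v) e1 \<longrightarrow> adjacent H (pV v) e2 \<longrightarrow>
        local_deg G pE w v e1 = local_deg G pE w v e2)"

definition has_degree ::
  "('v, 'e, 'x) mgraph_scheme \<Rightarrow> ('u, 'f, 'y) mgraph_scheme \<Rightarrow>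
   ('v \<Rightarrow> 'u) \<Rightarrow> ('e \<Rightarrow> 'f) \<Rightarrow> ('e \<Rightarrow> nat) \<Rightarrow> nat \<Rightarrow> bool" where
  "has_degree G H pV pE w n \<longleftrightarrow>
     (\<forall>u \<in> V H. \<forall>e' \<in> E H \<union> L H. adjacent H u e' \<longrightarrow>
        (\<Sum>v \<in> {v \<in> V G. pV v = u}. local_deg G pE w v e') = n)"

definition surjective_mor ::
  "('v, 'e, 'x) mgraph_scheme \<Rightarrow> ('u, 'f, 'y) mgraph_scheme \<Rightarrow>
   ('v \<Rightarrow> 'u) \<Rightarrow> ('e \<Rightarrow> 'f) \<Rightarrow> bool" where
  "surjective_mor G H pV pE \<longleftrightarrow> pV ` V G = V H \<and> pE ` E G = E H \<and> pE ` L G = L H"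

text \<open>Tropical hyperelliptic cover of a genus-zero metric tree T: surjective
degree-two harmonic map satisfying local Riemann--Hurwitz at every vertex.\<close>
definition hyperelliptic_cover ::
  "('v, 'e, 'x) mgraph_scheme \<Rightarrow> ('u, 'f, 'y) mgraph_scheme \<Rightarrow>
   ('v \<Rightarrow> 'u) \<Rightarrow> ('e \<Rightarrow> 'f) \<Rightarrow> ('e \<Rightarrow> nat) \<Rightarrow> bool" where
  "hyperelliptic_cover G T pV pE w \<longleftrightarrow>
     metric_graph G \<and> genus0_tree T \<and>
     harmonic G T pV pE w \<and> surjective_mor G T pV pE \<and> has_degree G T pV pE w 2 \<and>
     (\<forall>v \<in> V G. \<forall>e' \<in> E T \<union> L T. adjacent T (pV v) e' \<longrightarrow>
        2 - 2 * int (gen G v) =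
          2 * int (local_deg G pE w v e') - int (\<Sum>e \<in> E G \<union> L G. if w e = 2 then inc G v e else 0))"

definition branch_point ::
  "('v, 'e, 'x) mgraph_scheme \<Rightarrow> ('e \<Rightarrow> 'f) \<Rightarrow> ('e \<Rightarrow> nat) \<Rightarrow> 'f \<Rightarrow> bool" where
  "branch_point G pE w e' \<longleftrightarrow> (\<exists>e \<in> E G \<union> L G. pE e = e' \<and> w e = 2)"

definition iso_covers ::
  "('v1, 'e1, 'x1) mgraph_scheme \<Rightarrow> ('v1 \<Rightarrow> 'u) \<Rightarrow> ('e1 \<Rightarrow> 'f) \<Rightarrow> ('e1 \<Rightarrow> nat) \<Rightarrow>
   ('v2, 'e2, 'x2) mgraph_scheme \<Rightarrow> ('v2 \<Rightarrow> 'u) \<Rightarrow> ('e2 \<Rightarrow> 'f) \<Rightarrow> ('e2 \<Rightarrow> nat) \<Rightarrow> bool" where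
  "iso_covers G1 pV1 pE1 w1 G2 pV2 pE2 w2 \<longleftrightarrow>
     (\<exists>fV fE. bij_betw fV (V G1) (V G2) \<and> bij_betw fE (E G1) (E G2) \<and> bij_betw fE (L G1) (L G2) \<and>
        (\<forall>e \<in> E G1. {# fV (fst (ends G1 e)), fV (snd (ends G1 e)) #} =
                     {# fst (ends G2 (fE e)), snd (ends G2 (fE e)) #} \<and> len G2 (fE e) = len G1 e) \<and>
        (\<forall>l \<in> L G1. fV (fst (ends G1 l)) = fst (ends G2 (fE l))) \<and>
        (\<forall>v \<in> V G1. gen G2 (fV v) = gen G1 v \<and> pV2 (fV v) = pV1 v) \<and>
        (\<forall>e \<in> E G1 \<union> L G1. pE2 (fE e) = pE1 e \<and> w2 (fE e) = w1 e))"

definition genus2_cover_branched_at_legs ::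
  "('v, 'e, 'x) mgraph_scheme \<Rightarrow> ('u, 'f, 'y) mgraph_scheme \<Rightarrow>
   ('v \<Rightarrow> 'u) \<Rightarrow> ('e \<Rightarrow> 'f) \<Rightarrow> ('e \<Rightarrow> nat) \<Rightarrow> bool" where
  "genus2_cover_branched_at_legs G T pV pE w \<longleftrightarrow>
     hyperelliptic_cover G T pV pE w \<and> graph_genus G = 2 \<and> card (L G) = 6 \<and>
     (\<forall>l \<in> L T. branch_point G pE w l)"

end

theory Submission
  imports Defs
begin

lemma adj_rel_sym: "(a,b) \<in> adj_rel G \<Longrightarrow> (b,a) \<in> adj_rel G"
  unfolding adj_rel_def by auto

lemma rtrancl_adj_sym: "(a,b) \<in> (adj_rel G)\<^sup>* \<Longrightarrow> (b,a) \<in> (adj_rel G)\<^sup>*"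
proof (induction rule: rtrancl_induct)
  case base then show ?case by simp
next
  case (step y z)
  then show ?case by (meson adj_rel_sym converse_rtrancl_into_rtrancl)
qed

locale tree0 =
  fixes T :: "('tv, 'te) mgraph" and \<rho> :: 'tv
  assumes gt: "genus0_tree T" and rho: "\<rho> \<in> V T"
begin

lemma mg: "metric_graph T" using gt unfolding genus0_tree_def by simp
lemma finV: "finite (V T)" using mg unfolding metric_graph_def by simp
lemma finE: "finite (E T)" using mg unfolding metric_graph_def by simp
lemma finL: "finite (L T)" using mg unfolding metric_graph_def by simp
lemma EL_disj: "E T \<inter> L T = {}" using mg unfolding metric_graph_def by simp
lemma ends_V: "e \<in> E T \<Longrightarrow> fst (ends T e) \<in> V T \<and> snd (ends T e) \<in> V T"
  using mg unfolding metric_graph_def by simp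
lemma len_pos: "e \<in> E T \<Longrightarrow> len T e > 0"
  using mg unfolding metric_graph_def by simp
lemma leg_V: "l \<in> L T \<Longrightarrow> fst (ends T l) \<in> V T"
  using mg unfolding metric_graph_def by simp
lemma conn: "u \<in> V T \<Longrightarrow> v \<in> V T \<Longrightarrow> (u, v) \<in> (adj_rel T)\<^sup>*"
  using mg unfolding metric_graph_def by simp
lemma cardEV: "card (E T) + 1 = card (V T)" using gt unfolding genus0_tree_def by simp

lemma adj_V: "(a,b) \<in> adj_rel T \<Longrightarrow> a \<in> V T \<and> b \<in> V T"
  unfolding adj_rel_def using ends_V by (auto, metis fst_conv snd_conv)+

definition dist :: "'tv \<Rightarrow> nat" where
  "dist u = (LEAST n. (\<rho>, u) \<in> (adj_rel T) ^^ n)"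

lemma dist_reach: "u \<in> V T \<Longrightarrow> (\<rho>, u) \<in> (adj_rel T) ^^ (dist u)"
proof -
  assume "u \<in> V T"
  then have "(\<rho>, u) \<in> (adj_rel T)\<^sup>*" using conn rho by simp
  then obtain n where "(\<rho>, u) \<in> (adj_rel T) ^^ n" using rtrancl_power by blast
  then show ?thesis unfolding dist_def by (rule LeastI)
qed

lemma dist_min: "(\<rho>, u) \<in> (adj_rel T) ^^ n \<Longrightarrow> dist u \<le> n"
  unfolding dist_def by (rule Least_le)

lemma dist_adj: "(a,b) \<in> adj_rel T \<Longrightarrow> dist b \<le> dist a + 1"
proof -
  assume ab: "(a,b) \<in> adj_rel T"
  then have "a \<in> V T" using adj_V by blast
  then have "(\<rho>, a) \<in> (adj_rel T) ^^ (dist a)" by (rule dist_reach)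
  then have "(\<rho>, b) \<in> (adj_rel T) ^^ Suc (dist a)" using ab by auto
  then show ?thesis using dist_min by fastforce
qed

lemma dist_rho: "dist \<rho> = 0"
  using dist_min[of \<rho> 0] by simp

lemma dist0: "u \<in> V T \<Longrightarrow> dist u = 0 \<Longrightarrow> u = \<rho>"
  using dist_reach by fastforce

definition isparent :: "'tv \<Rightarrow> 'te \<Rightarrow> 'tv \<Rightarrow> bool" where
  "isparent u e w \<longleftrightarrow> e \<in> E T \<and> (ends T e = (w,u) \<or> ends T e = (u,w)) \<and> dist w + 1 = dist u"

lemma ex_parent: "u \<in> V T \<Longrightarrow> u \<noteq> \<rho> \<Longrightarrow> \<exists>e w. isparent u e w"
proof -
  assume u: "u \<in> V T" "u \<noteq> \<rho>"
  then have d: "dist u \<noteq> 0" using dist0 by blast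
  then obtain n where n: "dist u = Suc n" by (cases "dist u") auto
  have "(\<rho>, u) \<in> (adj_rel T) ^^ Suc n" using dist_reach[OF u(1)] n by simp
  then obtain y where y: "(\<rho>, y) \<in> (adj_rel T) ^^ n" "(y, u) \<in> adj_rel T"
    by (rule relpow_Suc_E)
  have "dist y \<le> n" using dist_min[OF y(1)] .
  moreover have "dist u \<le> dist y + 1" using dist_adj[OF y(2)] .
  ultimately have dy: "dist y + 1 = dist u" using n by simp
  from y(2) obtain e where "e \<in> E T" "ends T e = (y,u) \<or> ends T e = (u,y)"
    unfolding adj_rel_def by auto
  then show ?thesis using dy unfolding isparent_def by blast
qed

definition pe :: "'tv \<Rightarrow> 'te" where
  "pe u = (SOME e. \<exists>w. isparent u e w)"

definition par :: "'tv \<Rightarrow> 'tv" where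
  "par u = (if u = \<rho> then \<rho> else (SOME w. isparent u (pe u) w))"

lemma pe_par: "u \<in> V T \<Longrightarrow> u \<noteq> \<rho> \<Longrightarrow> isparent u (pe u) (par u)"
proof -
  assume u: "u \<in> V T" "u \<noteq> \<rho>"
  have "\<exists>w. isparent u (pe u) w" unfolding pe_def using ex_parent[OF u] by (rule someI_ex)
  then have "isparent u (pe u) (SOME w. isparent u (pe u) w)" by (rule someI_ex)
  then show ?thesis unfolding par_def using u(2) by simp
qed

lemma pe_inj: "inj_on pe (V T - {\<rho>})"
proof
  fix u u' assume u: "u \<in> V T - {\<rho>}" and u': "u' \<in> V T - {\<rho>}" and eq: "pe u = pe u'"
  have a: "isparent u (pe u) (par u)" using pe_par u by blast
  have b: "isparent u' (pe u) (par u')" using pe_par u' eq by auto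
  show "u = u'"
  proof (rule ccontr)
    assume ne: "u \<noteq> u'"
    from a have a1: "ends T (pe u) = (par u, u) \<or> ends T (pe u) = (u, par u)"
      and a2: "dist (par u) + 1 = dist u" unfolding isparent_def by auto
    from b have b1: "ends T (pe u) = (par u', u') \<or> ends T (pe u) = (u', par u')"
      and b2: "dist (par u') + 1 = dist u'" unfolding isparent_def by auto
    from a1 b1 ne have h: "u = par u' \<and> u' = par u" by auto
    then have "dist u' + 1 = dist (par u')" using a2 by metis
    with b2 show False by linarith
  qed
qed

lemma pe_E: "u \<in> V T \<Longrightarrow> u \<noteq> \<rho> \<Longrightarrow> pe u \<in> E T"
  using pe_par isparent_def by blast

lemma pe_bij: "bij_betw pe (V T - {\<rho>}) (E T)"
proof -
  have sub: "pe ` (V T - {\<rho>}) \<subseteq> E T" using pe_E by blast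
  have "card (pe ` (V T - {\<rho>})) = card (V T - {\<rho>})" using pe_inj by (rule card_image)
  also have "\<dots> = card (E T)" using cardEV rho finV by simp
  finally have "pe ` (V T - {\<rho>}) = E T" using sub finE card_subset_eq by metis
  then show ?thesis using pe_inj unfolding bij_betw_def by simp
qed

definition child :: "'te \<Rightarrow> 'tv" where
  "child e = inv_into (V T - {\<rho>}) pe e"

lemma child: "e \<in> E T \<Longrightarrow> child e \<in> V T \<and> child e \<noteq> \<rho> \<and> pe (child e) = e"
  unfolding child_def using pe_bij
  by (metis (no_types, lifting) DiffE bij_betw_def f_inv_into_f inv_into_into singletonI)

lemma child_pe: "u \<in> V T \<Longrightarrow> u \<noteq> \<rho> \<Longrightarrow> child (pe u) = u"
  unfolding child_def using pe_inj by (simp add: inv_into_f_f)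

lemma par_V: "u \<in> V T \<Longrightarrow> par u \<in> V T"
proof (cases "u = \<rho>")
  case True then show ?thesis using rho unfolding par_def by simp
next
  case False
  assume u: "u \<in> V T"
  have "isparent u (pe u) (par u)" using pe_par u False by blast
  then have "pe u \<in> E T" "ends T (pe u) = (par u, u) \<or> ends T (pe u) = (u, par u)"
    unfolding isparent_def by auto
  then show ?thesis using ends_V[of "pe u"] by auto
qed

lemma dist_par: "u \<in> V T \<Longrightarrow> u \<noteq> \<rho> \<Longrightarrow> dist (par u) + 1 = dist u"
  using pe_par isparent_def by blast

lemma par_ne: "u \<in> V T \<Longrightarrow> u \<noteq> \<rho> \<Longrightarrow> par u \<noteq> u"
  using dist_par by fastforce

lemma ends_edge: "e \<in> E T \<Longrightarrow>
   ends T e = (par (child e), child e) \<or> ends T e = (child e, par (child e))"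
  using child pe_par isparent_def by metis

lemma adjacent_E: "e \<in> E T \<Longrightarrow> adjacent T u e \<longleftrightarrow> (u = child e \<or> u = par (child e))"
  unfolding adjacent_def inc_def using ends_edge[of e] by auto

lemma adjacent_L: "l \<in> L T \<Longrightarrow> adjacent T u l \<longleftrightarrow> fst (ends T l) = u"
  unfolding adjacent_def inc_def using EL_disj by auto

lemma adjacent_out: "e \<notin> E T \<Longrightarrow> e \<notin> L T \<Longrightarrow> \<not> adjacent T u e"
  unfolding adjacent_def inc_def by auto

lemma edge_noloop: "e \<in> E T \<Longrightarrow> fst (ends T e) \<noteq> snd (ends T e)"
  using ends_edge[of e] child par_ne by (metis fst_conv snd_conv)

lemma inc_E: "e \<in> E T \<Longrightarrow> inc T u e = (if u = fst (ends T e) \<or> u = snd (ends T e) then 1 else 0)"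
  unfolding inc_def using edge_noloop[of e] by auto


lemma par_rho: "par \<rho> = \<rho>" unfolding par_def by simp

lemma dist_par_all: "u \<in> V T \<Longrightarrow> dist (par u) = dist u - 1"
  using dist_par par_rho dist_rho by (cases "u = \<rho>") fastforce+

lemma parpow: "u \<in> V T \<Longrightarrow> (par ^^ k) u \<in> V T \<and> dist ((par ^^ k) u) = dist u - k"
proof (induction k)
  case 0 then show ?case by simp
next
  case (Suc k)
  then show ?case using par_V dist_par_all by auto
qed

definition D :: "'tv \<Rightarrow> 'tv set" where
  "D u = {x \<in> V T. dist u \<le> dist x \<and> (par ^^ (dist x - dist u)) x = u}"

definition children :: "'tv \<Rightarrow> 'tv set" where
  "children u = {c \<in> V T. c \<noteq> \<rho> \<and> par c = u}"

lemma finD: "finite (D u)" unfolding D_def using finV by simp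
lemma finch: "finite (children u)" unfolding children_def using finV by simp
lemma D_sub: "D u \<subseteq> V T" unfolding D_def by auto

lemma dist_child: "c \<in> children u \<Longrightarrow> dist c = dist u + 1"
  unfolding children_def using dist_par by auto

lemma D_decomp: "u \<in> V T \<Longrightarrow> D u = insert u (\<Union>c \<in> children u. D c)"
proof (rule set_eqI, rule iffI)
  fix x assume u: "u \<in> V T" and x: "x \<in> D u"
  show "x \<in> insert u (\<Union>c \<in> children u. D c)"
  proof (cases "x = u")
    case True then show ?thesis by simp
  next
    case False
    define k where "k = dist x - dist u"
    have xV: "x \<in> V T" and le: "dist u \<le> dist x" and pk: "(par ^^ k) x = u"
      using x unfolding D_def k_def by auto
    have "k \<noteq> 0" using pk False by (cases k) auto
    then obtain j where j: "k = Suc j" by (cases k) auto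
    define c where "c = (par ^^ j) x"
    have cV: "c \<in> V T" and dc: "dist c = dist x - j" using parpow[OF xV, of j] unfolding c_def by auto
    have pc: "par c = u" using pk j unfolding c_def by simp
    have dcu: "dist c = dist u + 1" using dc j k_def le by simp
    then have "c \<noteq> \<rho>" using dist_rho by auto
    then have "c \<in> children u" using cV pc unfolding children_def by simp
    moreover have "x \<in> D c"
    proof -
      have "dist x - dist c = j" using dc dcu j k_def le by simp
      then show ?thesis unfolding D_def using xV dc dcu j k_def le c_def by auto
    qed
    ultimately show ?thesis by blast
  qed
next
  fix x assume u: "u \<in> V T" and x: "x \<in> insert u (\<Union>c \<in> children u. D c)"
  show "x \<in> D u"
  proof (cases "x = u")
    case True then show ?thesis using u unfolding D_def by simp
  next
    case False
    then obtain c where c: "c \<in> children u" "x \<in> D c" using x by auto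
    have dc: "dist c = dist u + 1" using dist_child[OF c(1)] .
    have xV: "x \<in> V T" and le: "dist c \<le> dist x" and pk: "(par ^^ (dist x - dist c)) x = c"
      using c(2) unfolding D_def by auto
    have "dist x - dist u = Suc (dist x - dist c)" using dc le by simp
    then have "(par ^^ (dist x - dist u)) x = par c" using pk by simp
    also have "\<dots> = u" using c(1) unfolding children_def by simp
    finally show ?thesis using xV le dc unfolding D_def by simp
  qed
qed

lemma D_disj: "c \<in> children u \<Longrightarrow> c' \<in> children u \<Longrightarrow> c \<noteq> c' \<Longrightarrow> D c \<inter> D c' = {}"
proof -
  assume c: "c \<in> children u" and c': "c' \<in> children u" and ne: "c \<noteq> c'"
  have "dist c = dist c'" using dist_child[OF c] dist_child[OF c'] by simp
  then show ?thesis using ne unfolding D_def by auto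
qed

lemma u_notin_D_child: "c \<in> children u \<Longrightarrow> u \<notin> D c"
  using dist_child unfolding D_def by fastforce

lemma D_rho: "D \<rho> = V T"
proof
  show "D \<rho> \<subseteq> V T" by (rule D_sub)
next
  show "V T \<subseteq> D \<rho>"
  proof
    fix x assume x: "x \<in> V T"
    have "(par ^^ dist x) x \<in> V T \<and> dist ((par ^^ dist x) x) = 0" using parpow[OF x, of "dist x"] by simp
    then have "(par ^^ dist x) x = \<rho>" using dist0 by blast
    then show "x \<in> D \<rho>" using x dist_rho unfolding D_def by simp
  qed
qed

definition nl :: "'tv \<Rightarrow> nat" where
  "nl x = card {l \<in> L T. fst (ends T l) = x}"

definition S :: "'tv \<Rightarrow> nat" where
  "S u = (\<Sum>x \<in> D u. nl x)"

lemma S_decomp: "u \<in> V T \<Longrightarrow> S u = nl u + (\<Sum>c \<in> children u. S c)"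
proof -
  assume u: "u \<in> V T"
  have "S u = (\<Sum>x \<in> insert u (\<Union>c \<in> children u. D c). nl x)" unfolding S_def using D_decomp[OF u] by simp
  also have "\<dots> = nl u + (\<Sum>x \<in> (\<Union>c \<in> children u. D c). nl x)"
    using u_notin_D_child finD finch by (subst sum.insert) auto
  also have "(\<Sum>x \<in> (\<Union>c \<in> children u. D c). nl x) = (\<Sum>c \<in> children u. S c)"
    unfolding S_def using finD finch D_disj by (subst sum.UNION_disjoint) auto
  finally show ?thesis .
qed

lemma sum_nl: "(\<Sum>x \<in> V T. nl x) = card (L T)"
proof -
  have "L T = (\<Union>x \<in> V T. {l \<in> L T. fst (ends T l) = x})" using leg_V by auto
  moreover have "card (\<Union>x \<in> V T. {l \<in> L T. fst (ends T l) = x}) = (\<Sum>x \<in> V T. card {l \<in> L T. fst (ends T l) = x})"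
    by (rule card_UN_disjoint) (auto simp: finV finL)
  ultimately have "card (L T) = (\<Sum>x \<in> V T. card {l \<in> L T. fst (ends T l) = x})"
    by simp
  then show ?thesis unfolding nl_def by simp
qed

lemma S_rho: "S \<rho> = card (L T)" unfolding S_def D_rho using sum_nl .

lemma parity_count: "finite A \<Longrightarrow> even (card {a \<in> A. odd (f a :: nat)}) = even (\<Sum>a \<in> A. f a)"
proof (induction A rule: finite_induct)
  case empty then show ?case by simp
next
  case (insert x F)
  have "{a \<in> insert x F. odd (f a)} = (if odd (f x) then insert x {a \<in> F. odd (f a)} else {a \<in> F. odd (f a)})"
    by auto
  then show ?case using insert by (auto simp: card_insert_if)
qed

lemma edges_at: "u \<in> V T \<Longrightarrow> {e \<in> E T. adjacent T u e} = (if u = \<rho> then {} else {pe u}) \<union> pe ` children u"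
proof (rule set_eqI, rule iffI)
  fix e assume u: "u \<in> V T" and e: "e \<in> {e \<in> E T. adjacent T u e}"
  then have eE: "e \<in> E T" using adjacent_E by auto
  have "u = child e \<or> u = par (child e)" using e adjacent_E by auto
  then show "e \<in> (if u = \<rho> then {} else {pe u}) \<union> pe ` children u"
  proof
    assume "u = child e" then show ?thesis using child[OF eE] by auto
  next
    assume "u = par (child e)"
    then have "child e \<in> children u" using child[OF eE] unfolding children_def by auto
    then show ?thesis using child[OF eE] by (metis UnI2 image_eqI)
  qed
next
  fix e assume u: "u \<in> V T" and e: "e \<in> (if u = \<rho> then {} else {pe u}) \<union> pe ` children u"
  show "e \<in> {e \<in> E T. adjacent T u e}"
  proof (cases "e \<in> pe ` children u")
    case True
    then obtain c where c: "c \<in> children u" "e = pe c" by auto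
    then have "c \<in> V T" "c \<noteq> \<rho>" "par c = u" unfolding children_def by auto
    then show ?thesis using c pe_E child_pe adjacent_E by auto
  next
    case False
    then have "u \<noteq> \<rho>" "e = pe u" using e by (auto split: if_splits)
    then show ?thesis using u pe_E child_pe adjacent_E by auto
  qed
qed

definition brE :: "'te \<Rightarrow> bool" where
  "brE e \<longleftrightarrow> odd (S (child e))"

definition rr :: "'tv \<Rightarrow> nat" where
  "rr u = card {e \<in> E T. adjacent T u e \<and> brE e} + nl u"

lemma rr_even: "even (card (L T)) \<Longrightarrow> u \<in> V T \<Longrightarrow> even (rr u)"
proof -
  assume ev: "even (card (L T))" and u: "u \<in> V T"
  have injc: "inj_on pe (children u)" using pe_inj by (rule inj_on_subset) (auto simp: children_def)
  have uch: "u \<notin> children u" unfolding children_def using par_ne by auto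
  have A: "{e \<in> E T. adjacent T u e \<and> brE e} =
      (if u = \<rho> \<or> \<not> odd (S u) then {} else {pe u}) \<union> pe ` {c \<in> children u. odd (S c)}"
  proof -
    have B: "{e \<in> E T. adjacent T u e \<and> brE e} = {e \<in> (if u = \<rho> then {} else {pe u}) \<union> pe ` children u. brE e}"
      using edges_at[OF u] by blast
    have C: "{e \<in> pe ` children u. brE e} = pe ` {c \<in> children u. odd (S c)}"
    proof
      show "{e \<in> pe ` children u. brE e} \<subseteq> pe ` {c \<in> children u. odd (S c)}"
      proof
        fix e assume "e \<in> {e \<in> pe ` children u. brE e}"
        then obtain c where c: "c \<in> children u" "e = pe c" "brE e" by auto
        then have "child e = c" using child_pe unfolding children_def by auto
        then show "e \<in> pe ` {c \<in> children u. odd (S c)}" using c unfolding brE_def by auto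
      qed
    next
      show "pe ` {c \<in> children u. odd (S c)} \<subseteq> {e \<in> pe ` children u. brE e}"
      proof
        fix e assume "e \<in> pe ` {c \<in> children u. odd (S c)}"
        then obtain c where c: "c \<in> children u" "e = pe c" "odd (S c)" by auto
        then have "child e = c" using child_pe unfolding children_def by auto
        then show "e \<in> {e \<in> pe ` children u. brE e}" using c unfolding brE_def by auto
      qed
    qed
    show ?thesis
    proof (cases "u = \<rho>")
      case True then show ?thesis using B C by simp
    next
      case False
      have "brE (pe u) = odd (S u)" unfolding brE_def using child_pe u False by simp
      then show ?thesis using B C False by auto
    qed
  qed
  have pnot: "u \<noteq> \<rho> \<Longrightarrow> pe u \<notin> pe ` {c \<in> children u. odd (S c)}"
  proof
    assume "u \<noteq> \<rho>" "pe u \<in> pe ` {c \<in> children u. odd (S c)}"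
    then obtain c where "c \<in> children u" "pe u = pe c" by auto
    then show False using pe_inj u \<open>u \<noteq> \<rho>\<close> uch par_ne[of c] unfolding inj_on_def children_def by auto
  qed
  have injc2: "inj_on pe {c \<in> children u. odd (S c)}" using injc by (rule inj_on_subset) auto
  have cardA: "card {e \<in> E T. adjacent T u e \<and> brE e} =
      (if u = \<rho> \<or> \<not> odd (S u) then 0 else 1) + card {c \<in> children u. odd (S c)}"
    unfolding A using pnot card_image[OF injc2] finch by (auto simp: card_insert_if)
  have pc: "even (card {c \<in> children u. odd (S c)}) = even (\<Sum>c \<in> children u. S c)"
    using parity_count finch by blast
  show "even (rr u)"
  proof (cases "u = \<rho>")
    case True
    then show ?thesis unfolding rr_def cardA using pc S_decomp[OF u] S_rho ev by auto
  next
    case False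
    then show ?thesis unfolding rr_def cardA using pc S_decomp[OF u] by auto
  qed
qed

lemma card_adj_vertices: "e \<in> E T \<Longrightarrow> card {u \<in> V T. adjacent T u e} = 2"
proof -
  assume e: "e \<in> E T"
  have "{u \<in> V T. adjacent T u e} = {child e, par (child e)}"
    using adjacent_E[OF e] child[OF e] par_V by auto
  moreover have "par (child e) \<noteq> child e" using par_ne child[OF e] by blast
  ultimately show ?thesis by simp
qed

lemma card_filter: "finite A \<Longrightarrow> card {x \<in> A. P x} = (\<Sum>x \<in> A. if P x then 1 else 0)"
  unfolding card_eq_sum by (rule sum.inter_filter)

lemma handshake: "(\<Sum>u \<in> V T. card {e \<in> E T. adjacent T u e \<and> P e}) = 2 * card {e \<in> E T. P e}"
proof -
  have "(\<Sum>u \<in> V T. card {e \<in> E T. adjacent T u e \<and> P e}) =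
        (\<Sum>u \<in> V T. \<Sum>e \<in> E T. if adjacent T u e \<and> P e then 1 else 0)"
    using finE by (simp add: card_filter)
  also have "\<dots> = (\<Sum>e \<in> E T. \<Sum>u \<in> V T. if adjacent T u e \<and> P e then 1 else 0)"
    by (rule sum.swap)
  also have "\<dots> = (\<Sum>e \<in> E T. if P e then 2 else 0)"
  proof (rule sum.cong)
    fix e assume e: "e \<in> E T"
    have "(\<Sum>u \<in> V T. if adjacent T u e \<and> P e then 1 else 0) =
          (if P e then card {u \<in> V T. adjacent T u e} else 0)"
      using finV by (simp add: card_filter)
    then show "(\<Sum>u \<in> V T. if adjacent T u e \<and> P e then 1 else (0::nat)) = (if P e then 2 else 0)"
      using card_adj_vertices[OF e] by simp
  qed simp
  also have "\<dots> = 2 * card {e \<in> E T. P e}"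
    unfolding card_filter[OF finE] sum_distrib_left by (rule sum.cong) auto
  finally show ?thesis .
qed

lemma sum_rr: "(\<Sum>u \<in> V T. rr u) = 2 * card {e \<in> E T. brE e} + card (L T)"
  unfolding rr_def using handshake[of brE] sum_nl by (simp add: sum.distrib)

end

context tree0
begin

definition br :: "'tv \<Rightarrow> bool" where
  "br u \<longleftrightarrow> rr u > 0"

definition vx :: "'tv \<Rightarrow> bool \<Rightarrow> 'tv \<times> bool" where
  "vx u b = (u, b \<and> \<not> br u)"

definition wC :: "'te \<times> bool \<Rightarrow> nat" where
  "wC x = (if fst x \<in> E T \<and> \<not> brE (fst x) then 1 else 2)"

definition Cov :: "('tv \<times> bool, 'te \<times> bool) mgraph" where
  "Cov = \<lparr> V = {(u,b). u \<in> V T \<and> (b \<longrightarrow> \<not> br u)},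
           E = {(e,b). e \<in> E T \<and> (b \<longrightarrow> \<not> brE e)},
           L = {(l,b). l \<in> L T \<and> \<not> b},
           ends = (\<lambda>(e,b). (vx (fst (ends T e)) b, vx (snd (ends T e)) b)),
           len = (\<lambda>x. len T (fst x) / real (wC x)),
           gen = (\<lambda>(u,b). (rr u - 2) div 2) \<rparr>"

lemma Cov_simps:
  "V Cov = {(u,b). u \<in> V T \<and> (b \<longrightarrow> \<not> br u)}"
  "E Cov = {(e,b). e \<in> E T \<and> (b \<longrightarrow> \<not> brE e)}"
  "L Cov = {(l,b). l \<in> L T \<and> \<not> b}"
  "ends Cov (e,b) = (vx (fst (ends T e)) b, vx (snd (ends T e)) b)"
  "len Cov x = len T (fst x) / real (wC x)"
  "gen Cov (u,b) = (rr u - 2) div 2"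
  unfolding Cov_def by auto

lemma br_adj: "e \<in> E T \<Longrightarrow> brE e \<Longrightarrow> adjacent T u e \<Longrightarrow> br u"
proof -
  assume e: "e \<in> E T" "brE e" "adjacent T u e"
  have "e \<in> {e \<in> E T. adjacent T u e \<and> brE e}" using e by simp
  then have "card {e \<in> E T. adjacent T u e \<and> brE e} > 0" using finE by (auto simp: card_gt_0_iff)
  then show ?thesis unfolding br_def rr_def by simp
qed

lemma br_leg: "l \<in> L T \<Longrightarrow> br (fst (ends T l))"
proof -
  assume l: "l \<in> L T"
  have "l \<in> {l' \<in> L T. fst (ends T l') = fst (ends T l)}" using l by simp
  then have "nl (fst (ends T l)) > 0" unfolding nl_def using finL by (auto simp: card_gt_0_iff)
  then show ?thesis unfolding br_def rr_def by simp
qed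

lemma vx_br: "br u \<Longrightarrow> vx u b = (u, False)" unfolding vx_def by simp

lemma card_split: "finite A \<Longrightarrow> card {x \<in> A. P x} + card {x \<in> A. \<not> P x} = card A"
proof -
  assume f: "finite A"
  have eq: "A = {x \<in> A. P x} \<union> {x \<in> A. \<not> P x}" by auto
  have c: "card ({x \<in> A. P x} \<union> {x \<in> A. \<not> P x}) = card {x \<in> A. P x} + card {x \<in> A. \<not> P x}"
    by (rule card_Un_disjoint) (use f in auto)
  show ?thesis by (metis eq c)
qed

lemma arith_aux: "2*s0 = 2*b + l - 2*(r::int) \<Longrightarrow> r + nr = v \<Longrightarrow> b + nb = (e::int) \<Longrightarrow> e + 1 = (v::int) \<Longrightarrow>
  2*(e + nb - (v + nr) + 1 + s0) = l - (2::int)" by (simp add: algebra_simps)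

lemma ends_Cov[simp]: "ends Cov (e,b) = (vx (fst (ends T e)) b, vx (snd (ends T e)) b)"
  by (rule Cov_simps(4))

lemma finVC: "finite (V Cov)"
proof -
  have "V Cov \<subseteq> V T \<times> UNIV" unfolding Cov_simps by auto
  moreover have "finite (V T \<times> (UNIV :: bool set))" using finV by simp
  ultimately show ?thesis using finite_subset by blast
qed

lemma finEC: "finite (E Cov)"
proof -
  have "E Cov \<subseteq> E T \<times> UNIV" unfolding Cov_simps by auto
  moreover have "finite (E T \<times> (UNIV :: bool set))" using finE by simp
  ultimately show ?thesis using finite_subset by blast
qed

lemma finLC: "finite (L Cov)"
proof -
  have "L Cov \<subseteq> L T \<times> UNIV" unfolding Cov_simps by auto
  moreover have "finite (L T \<times> (UNIV :: bool set))" using finL by simp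
  ultimately show ?thesis using finite_subset by blast
qed

lemma ELC_eq: "E Cov \<union> L Cov = (\<lambda>e. (e, False)) ` (E T \<union> L T) \<union> (\<lambda>e. (e, True)) ` {e \<in> E T. \<not> brE e}"
  unfolding Cov_simps by auto

lemma sumC: "(\<Sum>x \<in> E Cov \<union> L Cov. h x) =
   (\<Sum>e \<in> E T \<union> L T. h (e, False)) + (\<Sum>e \<in> {e \<in> E T. \<not> brE e}. h (e, True))"
proof -
  have "(\<Sum>x \<in> E Cov \<union> L Cov. h x) =
     (\<Sum>x \<in> (\<lambda>e. (e, False)) ` (E T \<union> L T). h x) + (\<Sum>x \<in> (\<lambda>e. (e, True)) ` {e \<in> E T. \<not> brE e}. h x)"
    unfolding ELC_eq by (rule sum.union_disjoint) (auto simp: finE finL)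
  also have "(\<Sum>x \<in> (\<lambda>e. (e, False)) ` (E T \<union> L T). h x) = (\<Sum>e \<in> E T \<union> L T. h (e, False))"
    by (subst sum.reindex) (auto simp: inj_on_def)
  also have "(\<Sum>x \<in> (\<lambda>e. (e, True)) ` {e \<in> E T. \<not> brE e}. h x) = (\<Sum>e \<in> {e \<in> E T. \<not> brE e}. h (e, True))"
    by (subst sum.reindex) (auto simp: inj_on_def)
  finally show ?thesis .
qed

lemma inc_CE: "e \<in> E T \<Longrightarrow> (b \<longrightarrow> \<not> brE e) \<Longrightarrow>
   inc Cov (u, bv) (e, b) = (if adjacent T u e \<and> bv = (b \<and> \<not> br u) then 1 else 0)"
proof -
  assume e: "e \<in> E T" and b: "b \<longrightarrow> \<not> brE e"
  have eC: "(e, b) \<in> E Cov" using e b unfolding Cov_simps by simp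
  have ne: "fst (ends T e) \<noteq> snd (ends T e)" using edge_noloop[OF e] .
  have adj: "adjacent T u e \<longleftrightarrow> u = fst (ends T e) \<or> u = snd (ends T e)"
    unfolding adjacent_def using inc_E[OF e] by auto
  show ?thesis using eC ne adj unfolding inc_def Cov_simps(4) vx_def by auto
qed

lemma inc_CL: "l \<in> L T \<Longrightarrow> inc Cov (u, bv) (l, False) = (if fst (ends T l) = u \<and> \<not> bv then 1 else 0)"
proof -
  assume l: "l \<in> L T"
  have "(l, False) \<notin> E Cov" using l EL_disj unfolding Cov_simps by auto
  moreover have "(l, False) \<in> L Cov" using l unfolding Cov_simps by simp
  ultimately show ?thesis unfolding inc_def Cov_simps(4) vx_def by auto
qed

lemma LD: "(u, bv) \<in> V Cov \<Longrightarrow> e' \<in> E T \<union> L T \<Longrightarrow> adjacent T u e' \<Longrightarrow>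
   local_deg Cov fst wC (u, bv) e' = (if br u then 2 else 1)"
proof -
  assume v: "(u, bv) \<in> V Cov" and e': "e' \<in> E T \<union> L T" and adj: "adjacent T u e'"
  have bvb: "bv \<longrightarrow> \<not> br u" using v unfolding Cov_simps by simp
  have "local_deg Cov fst wC (u, bv) e' =
     (\<Sum>e \<in> E T \<union> L T. if e = e' then inc Cov (u, bv) (e, False) * wC (e, False) else 0) +
     (\<Sum>e \<in> {e \<in> E T. \<not> brE e}. if e = e' then inc Cov (u, bv) (e, True) * wC (e, True) else 0)"
    unfolding local_deg_def by (subst sumC) simp
  also have "\<dots> = inc Cov (u, bv) (e', False) * wC (e', False) +
       (if e' \<in> E T \<and> \<not> brE e' then inc Cov (u, bv) (e', True) * wC (e', True) else 0)"
    using e' finE finL by (simp add: sum.delta)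
  also have "\<dots> = (if br u then 2 else 1)"
  proof (cases "e' \<in> E T")
    case True
    show ?thesis
    proof (cases "brE e'")
      case True
      then have "br u" using br_adj \<open>e' \<in> E T\<close> adj by blast
      then show ?thesis using inc_CE[OF \<open>e' \<in> E T\<close>, of False u bv] adj True bvb \<open>e' \<in> E T\<close>
        unfolding wC_def by auto
    next
      case False
      then show ?thesis using inc_CE[OF \<open>e' \<in> E T\<close>, of False u bv] inc_CE[OF \<open>e' \<in> E T\<close>, of True u bv]
          adj bvb \<open>e' \<in> E T\<close> unfolding wC_def by auto
    qed
  next
    case False
    then have l: "e' \<in> L T" using e' by simp
    then have "fst (ends T e') = u" using adj adjacent_L by blast
    then have "br u" using br_leg l by blast
    then show ?thesis using inc_CL[OF l, of u bv] False bvb \<open>fst (ends T e') = u\<close> unfolding wC_def by auto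
  qed
  finally show ?thesis .
qed

lemma RHsum: "(u, bv) \<in> V Cov \<Longrightarrow>
   (\<Sum>x \<in> E Cov \<union> L Cov. if wC x = 2 then inc Cov (u, bv) x else 0) = rr u"
proof -
  assume v: "(u, bv) \<in> V Cov"
  have bvb: "bv \<longrightarrow> \<not> br u" using v unfolding Cov_simps by simp
  have "(\<Sum>x \<in> E Cov \<union> L Cov. if wC x = 2 then inc Cov (u, bv) x else 0) =
     (\<Sum>e \<in> E T \<union> L T. if wC (e, False) = 2 then inc Cov (u, bv) (e, False) else 0) +
     (\<Sum>e \<in> {e \<in> E T. \<not> brE e}. if wC (e, True) = 2 then inc Cov (u, bv) (e, True) else 0)"
    by (rule sumC)
  also have "(\<Sum>e \<in> {e \<in> E T. \<not> brE e}. if wC (e, True) = 2 then inc Cov (u, bv) (e, True) else 0) = 0"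
    unfolding wC_def by simp
  also have "(\<Sum>e \<in> E T \<union> L T. if wC (e, False) = 2 then inc Cov (u, bv) (e, False) else 0) =
     (\<Sum>e \<in> E T. if wC (e, False) = 2 then inc Cov (u, bv) (e, False) else 0) +
     (\<Sum>e \<in> L T. if wC (e, False) = 2 then inc Cov (u, bv) (e, False) else 0)"
    using EL_disj finE finL by (simp add: sum.union_disjoint)
  also have "(\<Sum>e \<in> E T. if wC (e, False) = 2 then inc Cov (u, bv) (e, False) else 0) =
      (\<Sum>e \<in> E T. if adjacent T u e \<and> brE e then 1 else 0)"
  proof (rule sum.cong)
    fix e assume e: "e \<in> E T"
    show "(if wC (e, False) = 2 then inc Cov (u, bv) (e, False) else 0) = (if adjacent T u e \<and> brE e then 1 else 0)"
      using inc_CE[OF e, of False u bv] bvb br_adj[OF e] e unfolding wC_def by auto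
  qed simp
  also have "\<dots> = card {e \<in> E T. adjacent T u e \<and> brE e}" using card_filter[OF finE] by simp
  also have "(\<Sum>e \<in> L T. if wC (e, False) = 2 then inc Cov (u, bv) (e, False) else 0) =
      (\<Sum>e \<in> L T. if fst (ends T e) = u then 1 else 0)"
  proof (rule sum.cong)
    fix e assume e: "e \<in> L T"
    then have "e \<notin> E T" using EL_disj by auto
    then show "(if wC (e, False) = 2 then inc Cov (u, bv) (e, False) else 0) = (if fst (ends T e) = u then 1 else 0)"
      using inc_CL[OF e, of u bv] bvb br_leg[OF e] unfolding wC_def by auto
  qed simp
  also have "\<dots> = nl u" unfolding nl_def using card_filter[OF finL] by simp
  finally show ?thesis unfolding rr_def by simp
qed

end

locale tree1 = tree0 +
  assumes rho_leg: "\<exists>l \<in> L T. fst (ends T l) = \<rho>"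
    and evL: "even (card (L T))"
begin

lemma br_rho: "br \<rho>" using rho_leg br_leg by blast

lemma rr_ge2: "u \<in> V T \<Longrightarrow> br u \<Longrightarrow> rr u \<ge> 2"
proof -
  assume u: "u \<in> V T" and b: "br u"
  have "even (rr u)" using rr_even[OF evL u] .
  moreover have "rr u > 0" using b unfolding br_def by simp
  ultimately show ?thesis by (auto elim!: evenE)
qed

lemma rr_half: "u \<in> V T \<Longrightarrow> br u \<Longrightarrow> int ((rr u - 2) div 2) * 2 = int (rr u) - 2"
proof -
  assume u: "u \<in> V T" and b: "br u"
  have "even (rr u)" using rr_even[OF evL u] .
  then obtain k where k: "rr u = 2 * k" by (auto elim!: evenE)
  have "rr u \<ge> 2" using rr_ge2[OF u b] .
  then have k1: "k \<ge> 1" using k by simp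
  have "(rr u - 2) div 2 = k - 1" using k k1 by simp
  then show ?thesis using k k1 by (simp add: of_nat_diff)
qed

lemma nbr_rr: "\<not> br u \<Longrightarrow> rr u = 0" unfolding br_def by simp

lemma lift_adj: "(a, c) \<in> adj_rel T \<Longrightarrow> (vx a b, vx c b) \<in> adj_rel Cov"
proof -
  assume "(a, c) \<in> adj_rel T"
  then obtain e where e: "e \<in> E T" "ends T e = (a, c) \<or> ends T e = (c, a)" unfolding adj_rel_def by auto
  have aa: "adjacent T a e" "adjacent T c e" using e unfolding adjacent_def inc_def by auto
  show ?thesis
  proof (cases "brE e")
    case True
    then have "br a" "br c" using br_adj e aa by blast+
    then have "vx a b = vx a False" "vx c b = vx c False" unfolding vx_def by auto
    moreover have eC: "(e, False) \<in> E Cov" using e unfolding Cov_simps by simp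
    ultimately have "ends Cov (e, False) = (vx a b, vx c b) \<or> ends Cov (e, False) = (vx c b, vx a b)"
      using e(2) unfolding Cov_simps(4) by auto
    then show ?thesis unfolding adj_rel_def using eC by blast
  next
    case False
    then have eC: "(e, b) \<in> E Cov" using e unfolding Cov_simps by simp
    have "ends Cov (e, b) = (vx a b, vx c b) \<or> ends Cov (e, b) = (vx c b, vx a b)"
      using e(2) unfolding Cov_simps(4) by auto
    then show ?thesis unfolding adj_rel_def using eC by blast
  qed
qed

lemma lift_rt: "(a, c) \<in> (adj_rel T)\<^sup>* \<Longrightarrow> (vx a b, vx c b) \<in> (adj_rel Cov)\<^sup>*"
proof (induction rule: rtrancl_induct)
  case base then show ?case by simp
next
  case (step y z)
  then show ?case using lift_adj by (meson rtrancl.rtrancl_into_rtrancl)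
qed

lemma conn_Cov: "x \<in> V Cov \<Longrightarrow> ((\<rho>, False), x) \<in> (adj_rel Cov)\<^sup>*"
proof -
  assume x: "x \<in> V Cov"
  obtain u b where ub: "x = (u, b)" by (cases x)
  have u: "u \<in> V T" and bb: "b \<longrightarrow> \<not> br u" using x ub unfolding Cov_simps by auto
  have "x = vx u b" using ub bb unfolding vx_def by auto
  moreover have "(\<rho>, False) = vx \<rho> b" using br_rho unfolding vx_def by simp
  ultimately show ?thesis using lift_rt conn[OF rho u] by simp
qed

lemma mg_Cov: "metric_graph Cov"
  unfolding metric_graph_def
proof (intro conjI ballI)
  show "finite (V Cov)" "finite (E Cov)" "finite (L Cov)" using finVC finEC finLC by auto
  show "V Cov \<noteq> {}" using rho unfolding Cov_simps by auto
  show "E Cov \<inter> L Cov = {}" using EL_disj unfolding Cov_simps by auto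
next
  fix x assume x: "x \<in> E Cov"
  obtain e b where eb: "x = (e, b)" by (cases x)
  have e: "e \<in> E T" and bb: "b \<longrightarrow> \<not> brE e" using x eb unfolding Cov_simps by auto
  have vxV: "\<And>a. a \<in> V T \<Longrightarrow> vx a b \<in> V Cov" unfolding vx_def Cov_simps by auto
  show "fst (ends Cov x) \<in> V Cov" "snd (ends Cov x) \<in> V Cov"
    using vxV ends_V[OF e] eb by auto
  have "wC x > 0" unfolding wC_def by simp
  then show "len Cov x > 0" using len_pos[OF e] eb unfolding Cov_simps by simp
next
  fix x assume x: "x \<in> L Cov"
  obtain l b where lb: "x = (l, b)" by (cases x)
  then have "l \<in> L T" "\<not> b" using x unfolding Cov_simps by auto
  then show "fst (ends Cov x) \<in> V Cov" using leg_V lb by (auto simp: Cov_simps vx_def)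
next
  fix x y assume "x \<in> V Cov" "y \<in> V Cov"
  then have "((\<rho>, False), x) \<in> (adj_rel Cov)\<^sup>*" "((\<rho>, False), y) \<in> (adj_rel Cov)\<^sup>*" using conn_Cov by auto
  then show "(x, y) \<in> (adj_rel Cov)\<^sup>*" using rtrancl_adj_sym rtrancl_trans by metis
qed

lemma mor_Cov: "morphism Cov T fst fst wC"
  unfolding morphism_def
proof (intro conjI ballI)
  fix v assume "v \<in> V Cov" then show "fst v \<in> V T" unfolding Cov_simps by auto
next
  fix x assume x: "x \<in> E Cov"
  obtain e b where eb: "x = (e, b)" by (cases x)
  have e: "e \<in> E T" using x eb unfolding Cov_simps by auto
  show "fst x \<in> E T" using e eb by simp
  show "wC x > 0" unfolding wC_def by simp
  show "{#fst (fst (ends Cov x)), fst (snd (ends Cov x))#} = {#fst (ends T (fst x)), snd (ends T (fst x))#}"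
    using eb by (simp add: vx_def)
  have "real (wC x) > 0" unfolding wC_def by simp
  then show "len T (fst x) = real (wC x) * len Cov x" unfolding Cov_simps by simp
next
  fix x assume x: "x \<in> L Cov"
  obtain l b where lb: "x = (l, b)" by (cases x)
  then show "fst x \<in> L T" "wC x > 0" "fst (fst (ends Cov x)) = fst (ends T (fst x))"
    using x lb by (auto simp: Cov_simps wC_def vx_def)
qed

lemma harm_Cov: "harmonic Cov T fst fst wC"
  unfolding harmonic_def using mor_Cov
proof (intro conjI ballI impI)
  fix v e1 e2 assume v: "v \<in> V Cov" and e1: "e1 \<in> E T \<union> L T" and e2: "e2 \<in> E T \<union> L T"
    and a1: "adjacent T (fst v) e1" and a2: "adjacent T (fst v) e2"
  obtain u b where ub: "v = (u, b)" by (cases v)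
  show "local_deg Cov fst wC v e1 = local_deg Cov fst wC v e2"
    using LD[of u b e1] LD[of u b e2] v ub e1 e2 a1 a2 by simp
qed (rule mor_Cov)

lemma surj_Cov: "surjective_mor Cov T fst fst"
  unfolding surjective_mor_def
proof (intro conjI)
  show "fst ` V Cov = V T"
  proof
    show "fst ` V Cov \<subseteq> V T" unfolding Cov_simps by auto
    show "V T \<subseteq> fst ` V Cov"
    proof
      fix u assume "u \<in> V T"
      then have "(u, False) \<in> V Cov" unfolding Cov_simps by simp
      then show "u \<in> fst ` V Cov" by (rule rev_image_eqI) simp
    qed
  qed
  show "fst ` E Cov = E T"
  proof
    show "fst ` E Cov \<subseteq> E T" unfolding Cov_simps by auto
    show "E T \<subseteq> fst ` E Cov"
    proof
      fix u assume "u \<in> E T"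
      then have "(u, False) \<in> E Cov" unfolding Cov_simps by simp
      then show "u \<in> fst ` E Cov" by (rule rev_image_eqI) simp
    qed
  qed
  show "fst ` L Cov = L T"
  proof
    show "fst ` L Cov \<subseteq> L T" unfolding Cov_simps by auto
    show "L T \<subseteq> fst ` L Cov"
    proof
      fix u assume "u \<in> L T"
      then have "(u, False) \<in> L Cov" unfolding Cov_simps by simp
      then show "u \<in> fst ` L Cov" by (rule rev_image_eqI) simp
    qed
  qed
qed

lemma fiber_Cov: "u \<in> V T \<Longrightarrow> {v \<in> V Cov. fst v = u} = (if br u then {(u, False)} else {(u, False), (u, True)})"
  unfolding Cov_simps by auto

lemma deg_Cov: "has_degree Cov T fst fst wC 2"
  unfolding has_degree_def
proof (intro ballI impI)
  fix u e' assume u: "u \<in> V T" and e': "e' \<in> E T \<union> L T" and a: "adjacent T u e'"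
  have vF: "(u, False) \<in> V Cov" using u unfolding Cov_simps by simp
  show "(\<Sum>v \<in> {v \<in> V Cov. fst v = u}. local_deg Cov fst wC v e') = 2"
  proof (cases "br u")
    case True
    then show ?thesis unfolding fiber_Cov[OF u] using LD[OF vF e' a] by simp
  next
    case False
    have vT: "(u, True) \<in> V Cov" using u False unfolding Cov_simps by simp
    show ?thesis unfolding fiber_Cov[OF u] using LD[OF vF e' a] LD[OF vT e' a] False by simp
  qed
qed

lemma RH_Cov: "v \<in> V Cov \<Longrightarrow> e' \<in> E T \<union> L T \<Longrightarrow> adjacent T (fst v) e' \<Longrightarrow>
   2 - 2 * int (gen Cov v) = 2 * int (local_deg Cov fst wC v e') - int (\<Sum>x \<in> E Cov \<union> L Cov. if wC x = 2 then inc Cov v x else 0)"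
proof -
  assume v: "v \<in> V Cov" and e': "e' \<in> E T \<union> L T" and a: "adjacent T (fst v) e'"
  obtain u b where ub: "v = (u, b)" by (cases v)
  have u: "u \<in> V T" using v ub unfolding Cov_simps by auto
  have L1: "local_deg Cov fst wC v e' = (if br u then 2 else 1)" using LD v ub e' a by simp
  have R1: "(\<Sum>x \<in> E Cov \<union> L Cov. if wC x = 2 then inc Cov v x else 0) = rr u" unfolding ub using RHsum[of u b] v ub by simp
  have G1: "gen Cov v = (rr u - 2) div 2" using ub by (simp add: Cov_simps)
  show ?thesis
  proof (cases "br u")
    case True
    have "int ((rr u - 2) div 2) * 2 = int (rr u) - 2" using rr_half u True by blast
    then show ?thesis using L1 R1 G1 True by simp
  next
    case False
    then show ?thesis using L1 R1 G1 nbr_rr by simp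
  qed
qed

lemma hyp_Cov: "hyperelliptic_cover Cov T fst fst wC"
  unfolding hyperelliptic_cover_def using mg_Cov gt harm_Cov surj_Cov deg_Cov RH_Cov by blast

lemma card_EC: "card (E Cov) = card (E T) + card {e \<in> E T. \<not> brE e}"
proof -
  have "E Cov = (\<lambda>e. (e, False)) ` E T \<union> (\<lambda>e. (e, True)) ` {e \<in> E T. \<not> brE e}"
    unfolding Cov_simps by auto
  moreover have "card ((\<lambda>e. (e, False)) ` E T \<union> (\<lambda>e. (e, True)) ` {e \<in> E T. \<not> brE e}) =
     card ((\<lambda>e. (e, False)) ` E T) + card ((\<lambda>e. (e, True)) ` {e \<in> E T. \<not> brE e})"
    by (rule card_Un_disjoint) (auto simp: finE)
  moreover have "card ((\<lambda>e. (e, False)) ` E T) = card (E T)" by (rule card_image) (auto simp: inj_on_def)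
  moreover have "card ((\<lambda>e. (e, True)) ` {e \<in> E T. \<not> brE e}) = card {e \<in> E T. \<not> brE e}"
    by (rule card_image) (auto simp: inj_on_def)
  ultimately show ?thesis by simp
qed

lemma card_VC: "card (V Cov) = card (V T) + card {u \<in> V T. \<not> br u}"
proof -
  have "V Cov = (\<lambda>u. (u, False)) ` V T \<union> (\<lambda>u. (u, True)) ` {u \<in> V T. \<not> br u}"
    unfolding Cov_simps by auto
  moreover have "card ((\<lambda>u. (u, False)) ` V T \<union> (\<lambda>u. (u, True)) ` {u \<in> V T. \<not> br u}) =
     card ((\<lambda>u. (u, False)) ` V T) + card ((\<lambda>u. (u, True)) ` {u \<in> V T. \<not> br u})"
    by (rule card_Un_disjoint) (auto simp: finV)
  moreover have "card ((\<lambda>u. (u, False)) ` V T) = card (V T)" by (rule card_image) (auto simp: inj_on_def)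
  moreover have "card ((\<lambda>u. (u, True)) ` {u \<in> V T. \<not> br u}) = card {u \<in> V T. \<not> br u}"
    by (rule card_image) (auto simp: inj_on_def)
  ultimately show ?thesis by simp
qed

lemma sum_gen_C: "(\<Sum>v \<in> V Cov. int (gen Cov v)) = (\<Sum>u \<in> V T. int ((rr u - 2) div 2))"
proof -
  have "V Cov = (\<lambda>u. (u, False)) ` V T \<union> (\<lambda>u. (u, True)) ` {u \<in> V T. \<not> br u}"
    unfolding Cov_simps by auto
  then have "(\<Sum>v \<in> V Cov. int (gen Cov v)) =
     (\<Sum>v \<in> (\<lambda>u. (u, False)) ` V T. int (gen Cov v)) + (\<Sum>v \<in> (\<lambda>u. (u, True)) ` {u \<in> V T. \<not> br u}. int (gen Cov v))"
    using finV by (simp add: sum.union_disjoint, subst sum.union_disjoint) auto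
  also have "(\<Sum>v \<in> (\<lambda>u. (u, True)) ` {u \<in> V T. \<not> br u}. int (gen Cov v)) = 0"
    by (rule sum.neutral) (auto simp: Cov_simps nbr_rr)
  also have "(\<Sum>v \<in> (\<lambda>u. (u, False)) ` V T. int (gen Cov v)) = (\<Sum>u \<in> V T. int ((rr u - 2) div 2))"
    by (subst sum.reindex) (auto simp: inj_on_def Cov_simps)
  finally show ?thesis by simp
qed

lemma genus_Cov: "2 * graph_genus Cov = int (card (L T)) - 2"
proof -
  have g: "\<And>u. u \<in> V T \<Longrightarrow> 2 * int ((rr u - 2) div 2) = int (rr u) - (if br u then 2 else 0)"
  proof -
    fix u assume u: "u \<in> V T"
    show "2 * int ((rr u - 2) div 2) = int (rr u) - (if br u then 2 else 0)"
    proof (cases "br u")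
      case True
      show ?thesis using rr_half[OF u True] True by simp
    qed (simp add: nbr_rr)
  qed
  have "2 * (\<Sum>u \<in> V T. int ((rr u - 2) div 2)) = (\<Sum>u \<in> V T. int (rr u) - (if br u then 2 else 0))"
    using g by (simp add: sum_distrib_left)
  also have "\<dots> = (\<Sum>u \<in> V T. int (rr u)) - (\<Sum>u \<in> V T. (if br u then 2 else 0))"
    by (rule sum_subtractf)
  also have "(\<Sum>u \<in> V T. (if br u then 2 else 0)) = 2 * int (card {u \<in> V T. br u})"
    unfolding card_filter[OF finV] of_nat_sum sum_distrib_left by (rule sum.cong) auto
  also have "(\<Sum>u \<in> V T. int (rr u)) = int (\<Sum>u \<in> V T. rr u)" by (simp add: of_nat_sum)
  finally have s: "2 * (\<Sum>u \<in> V T. int ((rr u - 2) div 2)) =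
      2 * int (card {e \<in> E T. brE e}) + int (card (L T)) - 2 * int (card {u \<in> V T. br u})"
    using sum_rr by simp
  have c1: "card {u \<in> V T. br u} + card {u \<in> V T. \<not> br u} = card (V T)"
    using card_split[OF finV] .
  have c2: "card {e \<in> E T. brE e} + card {e \<in> E T. \<not> brE e} = card (E T)"
    using card_split[OF finE] .
  have c1i: "int (card {u \<in> V T. br u}) + int (card {u \<in> V T. \<not> br u}) = int (card (V T))"
    using c1 by (metis of_nat_add)
  have c2i: "int (card {e \<in> E T. brE e}) + int (card {e \<in> E T. \<not> brE e}) = int (card (E T))"
    using c2 by (metis of_nat_add)
  have c3i: "int (card (E T)) + 1 = int (card (V T))" using cardEV by (metis of_nat_add of_nat_1)
  define Sg where "Sg = (\<Sum>u\<in>V T. int ((rr u - 2) div 2))"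
  have s': "2 * Sg = 2 * int (card {e \<in> E T. brE e}) + int (card (L T)) - 2 * int (card {u \<in> V T. br u})"
    using s unfolding Sg_def .
  show ?thesis unfolding graph_genus_def card_EC card_VC sum_gen_C of_nat_add Sg_def[symmetric]
    by (rule arith_aux[OF s' c1i c2i c3i])
qed

lemma cardL_Cov: "card (L Cov) = card (L T)"
proof -
  have "L Cov = (\<lambda>l. (l, False)) ` L T" unfolding Cov_simps by auto
  then show ?thesis by (simp add: card_image inj_on_def)
qed

lemma branch_Cov: "l \<in> L T \<Longrightarrow> branch_point Cov fst wC l"
  unfolding branch_point_def
proof -
  assume l: "l \<in> L T"
  then have "(l, False) \<in> E Cov \<union> L Cov" unfolding Cov_simps by simp
  moreover have "wC (l, False) = 2" using l EL_disj unfolding wC_def by auto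
  ultimately show "\<exists>e \<in> E Cov \<union> L Cov. fst e = l \<and> wC e = 2" by force
qed

end

locale relab =
  fixes G :: "('a, 'b) mgraph" and iv :: "'a \<Rightarrow> nat" and ie :: "'b \<Rightarrow> nat"
  assumes mgG: "metric_graph G" and iv: "inj_on iv (V G)" and ie: "inj_on ie (E G \<union> L G)"
begin

definition jV where "jV = inv_into (V G) iv"
definition jE where "jE = inv_into (E G \<union> L G) ie"

definition G' :: "(nat, nat) mgraph" where
  "G' = \<lparr> V = iv ` V G, E = ie ` E G, L = ie ` L G,
          ends = (\<lambda>n. map_prod iv iv (ends G (jE n))),
          len = (\<lambda>n. len G (jE n)), gen = (\<lambda>n. gen G (jV n)) \<rparr>"

lemma G'_simps: "V G' = iv ` V G" "E G' = ie ` E G" "L G' = ie ` L G"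
  "ends G' n = map_prod iv iv (ends G (jE n))" "len G' n = len G (jE n)" "gen G' n = gen G (jV n)"
  unfolding G'_def by simp_all

lemma jV[simp]: "v \<in> V G \<Longrightarrow> jV (iv v) = v" unfolding jV_def using iv by (simp add: inv_into_f_f)
lemma jE[simp]: "x \<in> E G \<union> L G \<Longrightarrow> jE (ie x) = x" unfolding jE_def using ie by (simp add: inv_into_f_f)
lemma jE1[simp]: "x \<in> E G \<Longrightarrow> jE (ie x) = x" using jE by blast
lemma jE2[simp]: "x \<in> L G \<Longrightarrow> jE (ie x) = x" using jE by blast

lemma finV: "finite (V G)" using mgG unfolding metric_graph_def by simp
lemma finE: "finite (E G)" using mgG unfolding metric_graph_def by simp
lemma finL: "finite (L G)" using mgG unfolding metric_graph_def by simp
lemma EL_disj: "E G \<inter> L G = {}" using mgG unfolding metric_graph_def by simp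
lemma ends_V: "e \<in> E G \<Longrightarrow> fst (ends G e) \<in> V G \<and> snd (ends G e) \<in> V G"
  using mgG unfolding metric_graph_def by simp
lemma leg_V: "l \<in> L G \<Longrightarrow> fst (ends G l) \<in> V G"
  using mgG unfolding metric_graph_def by simp

lemma ie_E: "x \<in> E G \<union> L G \<Longrightarrow> ie x \<in> ie ` E G \<longleftrightarrow> x \<in> E G"
  using ie by (auto dest: inj_onD)
lemma ie_L: "x \<in> E G \<union> L G \<Longrightarrow> ie x \<in> ie ` L G \<longleftrightarrow> x \<in> L G"
  using ie by (auto dest: inj_onD)

lemma iv_eq: "a \<in> V G \<Longrightarrow> b \<in> V G \<Longrightarrow> iv a = iv b \<longleftrightarrow> a = b"
  using iv by (auto dest: inj_onD)

lemma inc_rel: "v \<in> V G \<Longrightarrow> x \<in> E G \<union> L G \<Longrightarrow> inc G' (iv v) (ie x) = inc G v x"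
proof -
  assume v: "v \<in> V G" and x: "x \<in> E G \<union> L G"
  show ?thesis
  proof (cases "x \<in> E G")
    case True
    then show ?thesis unfolding inc_def G'_simps using ie_E[OF x] ends_V[OF True] v iv_eq
      by (simp add: map_prod_def split_beta)
  next
    case False
    then have l: "x \<in> L G" using x by simp
    then show ?thesis unfolding inc_def G'_simps using ie_E[OF x] ie_L[OF x] False leg_V[OF l] v iv_eq
      by (simp add: map_prod_def split_beta)
  qed
qed

lemma sum_rel: "(\<Sum>y \<in> E G' \<union> L G'. f y) = (\<Sum>x \<in> E G \<union> L G. f (ie x))"
proof -
  have "E G' \<union> L G' = ie ` (E G \<union> L G)" unfolding G'_simps by auto
  then show ?thesis using ie by (simp add: sum.reindex)
qed

lemma ld_rel: "v \<in> V G \<Longrightarrow> local_deg G' (pE \<circ> jE) (w \<circ> jE) (iv v) e' = local_deg G pE w v e'"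
  unfolding local_deg_def sum_rel using inc_rel by (intro sum.cong) auto

lemma rh_rel: "v \<in> V G \<Longrightarrow>
   (\<Sum>y \<in> E G' \<union> L G'. if (w \<circ> jE) y = 2 then inc G' (iv v) y else 0) =
   (\<Sum>x \<in> E G \<union> L G. if w x = 2 then inc G v x else 0)"
  unfolding sum_rel using inc_rel by (intro sum.cong) auto

lemma adj_lift: "(a, b) \<in> adj_rel G \<Longrightarrow> (iv a, iv b) \<in> adj_rel G'"
proof -
  assume "(a, b) \<in> adj_rel G"
  then obtain e where e: "e \<in> E G" "ends G e = (a, b) \<or> ends G e = (b, a)" unfolding adj_rel_def by auto
  then have "ie e \<in> E G'" "ends G' (ie e) = (iv a, iv b) \<or> ends G' (ie e) = (iv b, iv a)"
    unfolding G'_simps by auto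
  then show ?thesis unfolding adj_rel_def by blast
qed

lemma rt_lift: "(a, b) \<in> (adj_rel G)\<^sup>* \<Longrightarrow> (iv a, iv b) \<in> (adj_rel G')\<^sup>*"
proof (induction rule: rtrancl_induct)
  case base then show ?case by simp
next
  case (step y z) then show ?case using adj_lift by (meson rtrancl.rtrancl_into_rtrancl)
qed

lemma mg': "metric_graph G'"
  unfolding metric_graph_def
proof (intro conjI ballI)
  show "finite (V G')" "finite (E G')" "finite (L G')" "V G' \<noteq> {}"
    using finV finE finL mgG unfolding G'_simps metric_graph_def by auto
  show "E G' \<inter> L G' = {}" using EL_disj ie unfolding G'_simps by (auto dest: inj_onD)
next
  fix y assume "y \<in> E G'"
  then obtain x where x: "x \<in> E G" "y = ie x" unfolding G'_simps by auto
  then show "fst (ends G' y) \<in> V G'" "snd (ends G' y) \<in> V G'" "len G' y > 0"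
    using ends_V[OF x(1)] mgG unfolding G'_simps metric_graph_def by auto
next
  fix y assume "y \<in> L G'"
  then obtain x where x: "x \<in> L G" "y = ie x" unfolding G'_simps by auto
  then show "fst (ends G' y) \<in> V G'" using leg_V[OF x(1)] unfolding G'_simps by auto
next
  fix a b assume "a \<in> V G'" "b \<in> V G'"
  then obtain a0 b0 where "a0 \<in> V G" "b0 \<in> V G" "a = iv a0" "b = iv b0" unfolding G'_simps by auto
  then show "(a, b) \<in> (adj_rel G')\<^sup>*" using mgG rt_lift unfolding metric_graph_def by auto
qed

lemma genus': "graph_genus G' = graph_genus G"
proof -
  have "card (E G') = card (E G)" unfolding G'_simps using ie by (simp add: card_image inj_on_Un)
  moreover have "card (V G') = card (V G)" unfolding G'_simps using iv by (simp add: card_image)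
  moreover have "(\<Sum>v \<in> V G'. int (gen G' v)) = (\<Sum>v \<in> V G. int (gen G v))"
    unfolding G'_simps using iv by (simp add: sum.reindex)
  ultimately show ?thesis unfolding graph_genus_def by simp
qed

lemma cardL': "card (L G') = card (L G)"
  unfolding G'_simps using ie by (simp add: card_image inj_on_Un)

lemma cover':
  assumes h: "genus2_cover_branched_at_legs G T pV pE w"
  shows "genus2_cover_branched_at_legs G' T (pV \<circ> jV) (pE \<circ> jE) (w \<circ> jE)"
proof -
  have hc: "hyperelliptic_cover G T pV pE w" using h unfolding genus2_cover_branched_at_legs_def by simp
  have harm: "harmonic G T pV pE w" and sur: "surjective_mor G T pV pE"
    and deg: "has_degree G T pV pE w 2" and gt: "genus0_tree T"
    using hc unfolding hyperelliptic_cover_def by blast+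
  have mor: "morphism G T pV pE w" using harm unfolding harmonic_def by blast
  have rh: "\<forall>v \<in> V G. \<forall>e' \<in> E T \<union> L T. adjacent T (pV v) e' \<longrightarrow>
        2 - 2 * int (gen G v) =
          2 * int (local_deg G pE w v e') - int (\<Sum>e \<in> E G \<union> L G. if w e = 2 then inc G v e else 0)"
    using hc unfolding hyperelliptic_cover_def by blast
  have mor': "morphism G' T (pV \<circ> jV) (pE \<circ> jE) (w \<circ> jE)"
    unfolding morphism_def
  proof (intro conjI ballI)
    fix v assume "v \<in> V G'"
    then show "(pV \<circ> jV) v \<in> V T" using mor unfolding G'_simps morphism_def by auto
  next
    fix y assume "y \<in> E G'"
    then obtain x where x: "x \<in> E G" "y = ie x" unfolding G'_simps by auto
    show "(pE \<circ> jE) y \<in> E T" "(w \<circ> jE) y > 0" "len T ((pE \<circ> jE) y) = real ((w \<circ> jE) y) * len G' y"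
      using x mor unfolding morphism_def G'_simps by auto
    show "{#(pV \<circ> jV) (fst (ends G' y)), (pV \<circ> jV) (snd (ends G' y))#} =
        {#fst (ends T ((pE \<circ> jE) y)), snd (ends T ((pE \<circ> jE) y))#}"
      using x mor ends_V[OF x(1)] unfolding morphism_def G'_simps by (auto simp: map_prod_def split_beta)
  next
    fix y assume "y \<in> L G'"
    then obtain x where x: "x \<in> L G" "y = ie x" unfolding G'_simps by auto
    show "(pE \<circ> jE) y \<in> L T" "(w \<circ> jE) y > 0" "(pV \<circ> jV) (fst (ends G' y)) = fst (ends T ((pE \<circ> jE) y))"
      using x mor leg_V[OF x(1)] unfolding morphism_def G'_simps by (auto simp: map_prod_def split_beta)
  qed
  have harm': "harmonic G' T (pV \<circ> jV) (pE \<circ> jE) (w \<circ> jE)"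
    unfolding harmonic_def
  proof (intro conjI ballI impI)
    fix v e1 e2 assume v: "v \<in> V G'" and e1: "e1 \<in> E T \<union> L T" and e2: "e2 \<in> E T \<union> L T"
      and a1: "adjacent T ((pV \<circ> jV) v) e1" and a2: "adjacent T ((pV \<circ> jV) v) e2"
    obtain v0 where v0: "v0 \<in> V G" "v = iv v0" using v unfolding G'_simps by auto
    show "local_deg G' (pE \<circ> jE) (w \<circ> jE) v e1 = local_deg G' (pE \<circ> jE) (w \<circ> jE) v e2"
    proof -
      have a1': "adjacent T (pV v0) e1" "adjacent T (pV v0) e2" using a1 a2 v0 by auto
      have "local_deg G pE w v0 e1 = local_deg G pE w v0 e2"
        using harm v0(1) e1 e2 a1' unfolding harmonic_def by blast
      then show ?thesis using ld_rel[OF v0(1), of pE w e1] ld_rel[OF v0(1), of pE w e2] v0(2) by simp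
    qed
  qed (rule mor')
  have sur': "surjective_mor G' T (pV \<circ> jV) (pE \<circ> jE)"
    using sur unfolding surjective_mor_def G'_simps by (auto simp: image_comp[symmetric] image_image)
  have fib: "\<And>u. {v \<in> V G'. (pV \<circ> jV) v = u} = iv ` {v \<in> V G. pV v = u}"
    unfolding G'_simps by auto
  have deg': "has_degree G' T (pV \<circ> jV) (pE \<circ> jE) (w \<circ> jE) 2"
    unfolding has_degree_def
  proof (intro ballI impI)
    fix u e' assume u: "u \<in> V T" and e': "e' \<in> E T \<union> L T" and a: "adjacent T u e'"
    have "(\<Sum>v \<in> {v \<in> V G'. (pV \<circ> jV) v = u}. local_deg G' (pE \<circ> jE) (w \<circ> jE) v e') =
          (\<Sum>v \<in> {v \<in> V G. pV v = u}. local_deg G' (pE \<circ> jE) (w \<circ> jE) (iv v) e')"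
    proof -
      have "inj_on iv {v \<in> V G. pV v = u}" by (rule inj_on_subset[OF iv]) auto
      then show ?thesis unfolding fib by (simp add: sum.reindex)
    qed
    also have "\<dots> = (\<Sum>v \<in> {v \<in> V G. pV v = u}. local_deg G pE w v e')"
      using ld_rel by (intro sum.cong) auto
    also have "\<dots> = 2" using deg u e' a unfolding has_degree_def by blast
    finally show "(\<Sum>v \<in> {v \<in> V G'. (pV \<circ> jV) v = u}. local_deg G' (pE \<circ> jE) (w \<circ> jE) v e') = 2" .
  qed
  have rh': "\<forall>v \<in> V G'. \<forall>e' \<in> E T \<union> L T. adjacent T ((pV \<circ> jV) v) e' \<longrightarrow>
        2 - 2 * int (gen G' v) =
          2 * int (local_deg G' (pE \<circ> jE) (w \<circ> jE) v e') - int (\<Sum>e \<in> E G' \<union> L G'. if (w \<circ> jE) e = 2 then inc G' v e else 0)"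
  proof (intro ballI impI)
    fix v e' assume v: "v \<in> V G'" and e': "e' \<in> E T \<union> L T" and a: "adjacent T ((pV \<circ> jV) v) e'"
    obtain v0 where v0: "v0 \<in> V G" "v = iv v0" using v unfolding G'_simps by auto
    show "2 - 2 * int (gen G' v) =
          2 * int (local_deg G' (pE \<circ> jE) (w \<circ> jE) v e') - int (\<Sum>e \<in> E G' \<union> L G'. if (w \<circ> jE) e = 2 then inc G' v e else 0)"
    proof -
      have a': "adjacent T (pV v0) e'" using a v0 by simp
      have A: "local_deg G' (pE \<circ> jE) (w \<circ> jE) (iv v0) e' = local_deg G pE w v0 e'" by (rule ld_rel[OF v0(1)])
      have B: "(\<Sum>y \<in> E G' \<union> L G'. if (w \<circ> jE) y = 2 then inc G' (iv v0) y else 0) =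
         (\<Sum>x \<in> E G \<union> L G. if w x = 2 then inc G v0 x else 0)" by (rule rh_rel[OF v0(1)])
      have C: "2 - 2 * int (gen G v0) = 2 * int (local_deg G pE w v0 e') - int (\<Sum>x \<in> E G \<union> L G. if w x = 2 then inc G v0 x else 0)"
        using rh v0(1) e' a' by blast
      have D: "gen G' (iv v0) = gen G v0" using v0(1) by (simp add: G'_simps)
      show ?thesis unfolding v0(2) D A B using C .
    qed
  qed
  have hc': "hyperelliptic_cover G' T (pV \<circ> jV) (pE \<circ> jE) (w \<circ> jE)"
    unfolding hyperelliptic_cover_def using mg' gt harm' sur' deg' rh' by blast
  have br': "\<forall>l \<in> L T. branch_point G' (pE \<circ> jE) (w \<circ> jE) l"
  proof
    fix l assume "l \<in> L T"
    then obtain x where x: "x \<in> E G \<union> L G" "pE x = l" "w x = 2"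
      using h unfolding genus2_cover_branched_at_legs_def branch_point_def by blast
    then have "ie x \<in> E G' \<union> L G'" unfolding G'_simps by auto
    then show "branch_point G' (pE \<circ> jE) (w \<circ> jE) l" unfolding branch_point_def using x by force
  qed
  show ?thesis unfolding genus2_cover_branched_at_legs_def
    using hc' br' genus' cardL' h unfolding genus2_cover_branched_at_legs_def by simp
qed

end

lemma relabel_nat:
  fixes G :: "('a, 'b) mgraph"
  assumes h: "genus2_cover_branched_at_legs G T pV pE w"
  shows "\<exists>(G' :: (nat, nat) mgraph) pV' pE' w'. genus2_cover_branched_at_legs G' T pV' pE' w'"
proof -
  have mg: "metric_graph G" using h unfolding genus2_cover_branched_at_legs_def hyperelliptic_cover_def by simp
  then have "finite (V G)" "finite (E G \<union> L G)" unfolding metric_graph_def by auto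
  then obtain iv :: "'a \<Rightarrow> nat" and ie :: "'b \<Rightarrow> nat" where "inj_on iv (V G)" "inj_on ie (E G \<union> L G)"
    using finite_imp_inj_to_nat_seg by metis
  then interpret relab G iv ie using mg by unfold_locales
  show ?thesis using cover'[OF h] by blast
qed

lemma mset2: "{#p, q#} = {#a, b#} \<Longrightarrow> (p = a \<and> q = b) \<or> (p = b \<and> q = a)"
  by (metis add_eq_conv_ex add_mset_eq_single)

lemma sum2:
  fixes f :: "'a \<Rightarrow> nat"
  assumes fin: "finite A" and pos: "\<forall>x\<in>A. f x > 0" and s: "(\<Sum>x\<in>A. f x) = 2"
  shows "(\<exists>x. A = {x} \<and> f x = 2) \<or> (\<exists>x y. x \<noteq> y \<and> A = {x, y} \<and> f x = 1 \<and> f y = 1)"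
proof -
  have "A \<noteq> {}" using s by auto
  then obtain x where x: "x \<in> A" by auto
  have s1: "f x + (\<Sum>z\<in>A - {x}. f z) = 2" using s x fin by (simp add: sum.remove)
  show ?thesis
  proof (cases "A - {x} = {}")
    case True
    then have "A = {x}" using x by auto
    then show ?thesis using s by simp
  next
    case False
    then obtain y where y: "y \<in> A - {x}" by auto
    have s2: "(\<Sum>z\<in>A - {x}. f z) = f y + (\<Sum>z\<in>A - {x} - {y}. f z)" using y fin by (simp add: sum.remove)
    have "f x > 0" "f y > 0" using pos x y by auto
    then have fx: "f x = 1" "f y = 1" and s3: "(\<Sum>z\<in>A - {x} - {y}. f z) = 0" using s1 s2 by linarith+
    have "A - {x} - {y} = {}"
    proof (rule ccontr)
      assume "A - {x} - {y} \<noteq> {}"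
      then obtain z where z: "z \<in> A - {x} - {y}" by auto
      then have "f z > 0" using pos by auto
      moreover have "f z \<le> (\<Sum>z\<in>A - {x} - {y}. f z)" using z fin by (intro member_le_sum) auto
      ultimately show False using s3 by simp
    qed
    then have "A = {x, y}" using x y by auto
    then show ?thesis using fx y by blast
  qed
qed

locale coverL = tree1 T \<rho> for T :: "('tv, 'te) mgraph" and \<rho> +
  fixes G :: "('v, 'e) mgraph" and pV :: "'v \<Rightarrow> 'tv" and pE :: "'e \<Rightarrow> 'te" and w :: "'e \<Rightarrow> nat"
  assumes hc: "hyperelliptic_cover G T pV pE w"
    and brl: "\<forall>l \<in> L T. branch_point G pE w l"
begin

lemma mgG: "metric_graph G" using hc unfolding hyperelliptic_cover_def by simp
lemma finVG: "finite (V G)" using mgG unfolding metric_graph_def by simp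
lemma finEG: "finite (E G)" using mgG unfolding metric_graph_def by simp
lemma finLG: "finite (L G)" using mgG unfolding metric_graph_def by simp
lemma EL_disjG: "E G \<inter> L G = {}" using mgG unfolding metric_graph_def by simp
lemma ends_VG: "x \<in> E G \<Longrightarrow> fst (ends G x) \<in> V G \<and> snd (ends G x) \<in> V G"
  using mgG unfolding metric_graph_def by simp
lemma leg_VG: "x \<in> L G \<Longrightarrow> fst (ends G x) \<in> V G"
  using mgG unfolding metric_graph_def by simp
lemma connG: "a \<in> V G \<Longrightarrow> b \<in> V G \<Longrightarrow> (a, b) \<in> (adj_rel G)\<^sup>*"
  using mgG unfolding metric_graph_def by simp
lemma harmG: "harmonic G T pV pE w" using hc unfolding hyperelliptic_cover_def by simp
lemma morG: "morphism G T pV pE w" using harmG unfolding harmonic_def by simp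
lemma degG: "has_degree G T pV pE w 2" using hc unfolding hyperelliptic_cover_def by simp
lemma surG: "surjective_mor G T pV pE" using hc unfolding hyperelliptic_cover_def by simp
lemma rhG: "v \<in> V G \<Longrightarrow> e' \<in> E T \<union> L T \<Longrightarrow> adjacent T (pV v) e' \<Longrightarrow>
        2 - 2 * int (gen G v) =
          2 * int (local_deg G pE w v e') - int (\<Sum>e \<in> E G \<union> L G. if w e = 2 then inc G v e else 0)"
  using hc unfolding hyperelliptic_cover_def by blast

lemma pV_V: "v \<in> V G \<Longrightarrow> pV v \<in> V T" using morG unfolding morphism_def by simp
lemma mor_E: "x \<in> E G \<Longrightarrow> pE x \<in> E T \<and> w x > 0 \<and>
   {# pV (fst (ends G x)), pV (snd (ends G x)) #} = {# fst (ends T (pE x)), snd (ends T (pE x)) #} \<and>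
   len T (pE x) = real (w x) * len G x"
  using morG unfolding morphism_def by blast
lemma mor_L: "x \<in> L G \<Longrightarrow> pE x \<in> L T \<and> w x > 0 \<and> pV (fst (ends G x)) = fst (ends T (pE x))"
  using morG unfolding morphism_def by blast
lemma w_pos: "x \<in> E G \<union> L G \<Longrightarrow> w x > 0" using mor_E mor_L by blast

definition endo :: "'e \<Rightarrow> 'tv \<Rightarrow> 'v" where
  "endo x a = (if x \<in> L G then fst (ends G x)
               else if pV (fst (ends G x)) = a then fst (ends G x) else snd (ends G x))"

lemma inc_endo:
  assumes x: "x \<in> E G \<union> L G" and a: "adjacent T a (pE x)"
  shows "endo x a \<in> V G \<and> pV (endo x a) = a \<and>
         (\<forall>v \<in> V G. pV v = a \<longrightarrow> inc G v x = (if v = endo x a then 1 else 0))"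
proof (cases "x \<in> E G")
  case True
  have m: "pE x \<in> E T" "{# pV (fst (ends G x)), pV (snd (ends G x)) #} = {# fst (ends T (pE x)), snd (ends T (pE x)) #}"
    using mor_E[OF True] by auto
  have ne: "fst (ends T (pE x)) \<noteq> snd (ends T (pE x))" using edge_noloop[OF m(1)] .
  have ain: "a = fst (ends T (pE x)) \<or> a = snd (ends T (pE x))"
    using a inc_E[OF m(1)] unfolding adjacent_def by (auto split: if_splits)
  have xL: "x \<notin> L G" using True EL_disjG by auto
  have eV: "fst (ends G x) \<in> V G" "snd (ends G x) \<in> V G" using ends_VG[OF True] by auto
  from mset2[OF m(2)] ain ne show ?thesis
    unfolding endo_def inc_def using xL True eV by auto
next
  case False
  then have xL: "x \<in> L G" using x by simp
  have m: "pE x \<in> L T" "pV (fst (ends G x)) = fst (ends T (pE x))" using mor_L[OF xL] by auto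
  have "fst (ends T (pE x)) = a" using a adjacent_L[OF m(1)] by simp
  then show ?thesis unfolding endo_def inc_def using xL False leg_VG[OF xL] m by auto
qed

definition Ef :: "'te \<Rightarrow> 'e set" where
  "Ef e' = {x \<in> E G \<union> L G. pE x = e'}"

definition Fib :: "'tv \<Rightarrow> 'v set" where
  "Fib a = {v \<in> V G. pV v = a}"

lemma finEf: "finite (Ef e')" unfolding Ef_def using finEG finLG by simp
lemma finFib: "finite (Fib a)" unfolding Fib_def using finVG by simp

lemma ld_Ef:
  assumes v: "v \<in> V G" and a: "adjacent T (pV v) e'"
  shows "local_deg G pE w v e' = (\<Sum>x \<in> Ef e'. if endo x (pV v) = v then w x else 0)"
proof -
  have "local_deg G pE w v e' = (\<Sum>x \<in> Ef e'. inc G v x * w x)"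
    unfolding local_deg_def Ef_def by (rule sum.inter_filter[symmetric]) (simp add: finEG finLG)
  also have "\<dots> = (\<Sum>x \<in> Ef e'. if endo x (pV v) = v then w x else 0)"
  proof (rule sum.cong)
    fix x assume "x \<in> Ef e'"
    then have x: "x \<in> E G \<union> L G" "pE x = e'" unfolding Ef_def by auto
    then show "inc G v x * w x = (if endo x (pV v) = v then w x else 0)"
      using inc_endo[OF x(1)] a v by auto
  qed simp
  finally show ?thesis .
qed

lemma Ef_sum:
  assumes e': "e' \<in> E T \<union> L T"
  shows "(\<Sum>x \<in> Ef e'. w x) = 2"
proof -
  define a where "a = fst (ends T e')"
  have aV: "a \<in> V T" using e' ends_V leg_V unfolding a_def by auto
  have adj: "adjacent T a e'" using e' unfolding a_def adjacent_def inc_def by auto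
  have "2 = (\<Sum>v \<in> Fib a. local_deg G pE w v e')"
    using degG aV e' adj unfolding has_degree_def Fib_def by auto
  also have "\<dots> = (\<Sum>v \<in> Fib a. \<Sum>x \<in> Ef e'. if endo x a = v then w x else 0)"
    using ld_Ef adj unfolding Fib_def by (intro sum.cong) auto
  also have "\<dots> = (\<Sum>x \<in> Ef e'. \<Sum>v \<in> Fib a. if endo x a = v then w x else 0)"
    by (rule sum.swap)
  also have "\<dots> = (\<Sum>x \<in> Ef e'. w x)"
  proof (rule sum.cong)
    fix x assume "x \<in> Ef e'"
    then have x: "x \<in> E G \<union> L G" "pE x = e'" unfolding Ef_def by auto
    have "endo x a \<in> Fib a" using inc_endo[OF x(1)] adj x(2) unfolding Fib_def by auto
    then show "(\<Sum>v \<in> Fib a. if endo x a = v then w x else 0) = w x"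
      using finFib by (simp add: sum.delta)
  qed simp
  finally show ?thesis by simp
qed

lemma Ef_cases:
  assumes e': "e' \<in> E T \<union> L T"
  shows "(\<exists>x. Ef e' = {x} \<and> w x = 2) \<or> (\<exists>x y. x \<noteq> y \<and> Ef e' = {x, y} \<and> w x = 1 \<and> w y = 1)"
  by (rule sum2[OF finEf _ Ef_sum[OF e']]) (auto simp: Ef_def w_pos)


lemma LG_ne: "L G \<noteq> {}"
proof -
  have "L T \<noteq> {}" using rho_leg by auto
  moreover have "pE ` L G = L T" using surG unfolding surjective_mor_def by simp
  ultimately show ?thesis by auto
qed

lemma incident: "v \<in> V G \<Longrightarrow> \<exists>x \<in> E G \<union> L G. inc G v x > 0"
proof -
  assume v: "v \<in> V G"
  obtain l where l: "l \<in> L G" using LG_ne by auto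
  define y where "y = fst (ends G l)"
  have yV: "y \<in> V G" using leg_VG[OF l] unfolding y_def .
  show ?thesis
  proof (cases "v = y")
    case True
    have "l \<notin> E G" using l EL_disjG by auto
    then have "inc G v l = 1" using l True unfolding inc_def y_def by simp
    moreover have "l \<in> E G \<union> L G" using l by simp
    ultimately show ?thesis by (intro bexI[of _ l]) auto
  next
    case False
    have "(v, y) \<in> (adj_rel G)\<^sup>*" using connG v yV by simp
    then obtain z where "(v, z) \<in> adj_rel G" using False by (metis converse_rtranclE)
    then obtain e where e: "e \<in> E G" "ends G e = (v, z) \<or> ends G e = (z, v)" unfolding adj_rel_def by auto
    then have "inc G v e > 0" unfolding inc_def by auto
    then show ?thesis using e by auto
  qed
qed

lemma inc_adj:
  assumes v: "v \<in> V G" and x: "x \<in> E G \<union> L G" and i: "inc G v x > 0"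
  shows "adjacent T (pV v) (pE x) \<and> endo x (pV v) = v"
proof -
  have adj: "adjacent T (pV v) (pE x)"
  proof (cases "x \<in> E G")
    case True
    have m: "pE x \<in> E T" "{# pV (fst (ends G x)), pV (snd (ends G x)) #} = {# fst (ends T (pE x)), snd (ends T (pE x)) #}"
      using mor_E[OF True] by auto
    have "v = fst (ends G x) \<or> v = snd (ends G x)" using i True unfolding inc_def by (auto split: if_splits)
    then have "pV v = fst (ends T (pE x)) \<or> pV v = snd (ends T (pE x))" using mset2[OF m(2)] by auto
    then show ?thesis using inc_E[OF m(1)] unfolding adjacent_def by auto
  next
    case False
    then have xL: "x \<in> L G" using x by simp
    then have "v = fst (ends G x)" using i False unfolding inc_def by (auto split: if_splits)
    then show ?thesis using mor_L[OF xL] adjacent_L by auto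
  qed
  have "inc G v x = (if v = endo x (pV v) then 1 else 0)" using inc_endo[OF x adj] v by auto
  then show ?thesis using adj i by (auto split: if_splits)
qed

lemma ld_ge: "v \<in> V G \<Longrightarrow> x \<in> Ef e' \<Longrightarrow> adjacent T (pV v) e' \<Longrightarrow> endo x (pV v) = v \<Longrightarrow> local_deg G pE w v e' \<ge> w x"
proof -
  assume v: "v \<in> V G" and x: "x \<in> Ef e'" and a: "adjacent T (pV v) e'" and ev: "endo x (pV v) = v"
  have "w x = (if endo x (pV v) = v then w x else 0)" using ev by simp
  also have "\<dots> \<le> (\<Sum>x \<in> Ef e'. if endo x (pV v) = v then w x else 0)"
    by (rule member_le_sum[OF x]) (auto simp: finEf)
  finally show ?thesis using ld_Ef[OF v a] by simp
qed

lemma ld_pos: "v \<in> V G \<Longrightarrow> e' \<in> E T \<union> L T \<Longrightarrow> adjacent T (pV v) e' \<Longrightarrow> local_deg G pE w v e' \<ge> 1"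
proof -
  assume v: "v \<in> V G" and e': "e' \<in> E T \<union> L T" and a: "adjacent T (pV v) e'"
  obtain x where x: "x \<in> E G \<union> L G" "inc G v x > 0" using incident[OF v] by auto
  have ia: "adjacent T (pV v) (pE x)" "endo x (pV v) = v" using inc_adj[OF v x] by auto
  have xe: "pE x \<in> E T \<union> L T" using x(1) mor_E mor_L by blast
  have "local_deg G pE w v (pE x) \<ge> w x" using ld_ge[OF v _ ia] x(1) unfolding Ef_def by auto
  moreover have "w x \<ge> 1" using w_pos[OF x(1)] by simp
  moreover have "local_deg G pE w v (pE x) = local_deg G pE w v e'"
    using harmG v xe e' ia a unfolding harmonic_def by blast
  ultimately show ?thesis by simp
qed

lemma ex_adj: "a \<in> V T \<Longrightarrow> \<exists>e' \<in> E T \<union> L T. adjacent T a e'"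
proof -
  assume a: "a \<in> V T"
  show ?thesis
  proof (cases "a = \<rho>")
    case True
    then obtain l where "l \<in> L T" "fst (ends T l) = a" using rho_leg by auto
    then show ?thesis using adjacent_L by auto
  next
    case False
    then have "pe a \<in> E T" "adjacent T a (pe a)" using pe_E a adjacent_E child_pe by auto
    then show ?thesis by auto
  qed
qed

lemma fib_cases:
  assumes a: "a \<in> V T" and e': "e' \<in> E T \<union> L T" and adj: "adjacent T a e'"
  shows "(\<exists>v. Fib a = {v} \<and> local_deg G pE w v e' = 2) \<or>
         (\<exists>v1 v2. v1 \<noteq> v2 \<and> Fib a = {v1, v2} \<and> local_deg G pE w v1 e' = 1 \<and> local_deg G pE w v2 e' = 1)"
proof (rule sum2[OF finFib])
  show "\<forall>v \<in> Fib a. local_deg G pE w v e' > 0" using ld_pos e' adj unfolding Fib_def by fastforce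
  show "(\<Sum>v \<in> Fib a. local_deg G pE w v e') = 2" using degG a e' adj unfolding has_degree_def Fib_def by auto
qed

definition bG :: "'te \<Rightarrow> bool" where
  "bG e' \<longleftrightarrow> (\<exists>x \<in> Ef e'. w x = 2)"

lemma bG_bp: "bG e' = branch_point G pE w e'" unfolding bG_def branch_point_def Ef_def by auto

lemma ld_const: "v \<in> V G \<Longrightarrow> e1 \<in> E T \<union> L T \<Longrightarrow> e2 \<in> E T \<union> L T \<Longrightarrow>
   adjacent T (pV v) e1 \<Longrightarrow> adjacent T (pV v) e2 \<Longrightarrow> local_deg G pE w v e1 = local_deg G pE w v e2"
  using harmG unfolding harmonic_def by blast

lemma branched_single:
  assumes a: "a \<in> V T" and e': "e' \<in> E T \<union> L T" and adj: "adjacent T a e'" and x: "x \<in> Ef e'" and wx: "w x = 2"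
  shows "Fib a = {endo x a}"
proof -
  have x1: "x \<in> E G \<union> L G" "pE x = e'" using x unfolding Ef_def by auto
  have en: "endo x a \<in> V G" "pV (endo x a) = a" using inc_endo[OF x1(1)] adj x1(2) by auto
  have ge: "local_deg G pE w (endo x a) e' \<ge> 2" using ld_ge[OF en(1) x] adj en wx by simp
  have enF: "endo x a \<in> Fib a" unfolding Fib_def using en by simp
  from fib_cases[OF a e' adj] show ?thesis
  proof (elim disjE exE conjE)
    fix v assume "Fib a = {v}" then show ?thesis using enF by auto
  next
    fix v1 v2 assume h: "Fib a = {v1, v2}" "local_deg G pE w v1 e' = 1" "local_deg G pE w v2 e' = 1"
    then have "endo x a = v1 \<or> endo x a = v2" using enF by auto
    then show ?thesis using ge h by auto
  qed
qed

definition rG :: "'tv \<Rightarrow> nat" where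
  "rG a = card {e' \<in> E T \<union> L T. adjacent T a e' \<and> bG e'}"

lemma Ef_branched: "e' \<in> E T \<union> L T \<Longrightarrow> bG e' \<Longrightarrow> \<exists>x. Ef e' = {x} \<and> w x = 2"
  using Ef_cases[of e'] unfolding bG_def by auto

lemma rsum: "v \<in> V G \<Longrightarrow> (\<Sum>x \<in> E G \<union> L G. if w x = 2 then inc G v x else 0) = rG (pV v)"
proof -
  assume v: "v \<in> V G"
  define a where "a = pV v"
  have aV: "a \<in> V T" using pV_V v unfolding a_def by simp
  have img: "pE ` (E G \<union> L G) \<subseteq> E T \<union> L T" using mor_E mor_L by blast
  have "(\<Sum>x \<in> E G \<union> L G. if w x = 2 then inc G v x else 0) =
        (\<Sum>e' \<in> E T \<union> L T. \<Sum>x \<in> Ef e'. if w x = 2 then inc G v x else 0)"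
    unfolding Ef_def by (rule sum.group[symmetric]) (auto simp: finEG finLG finE finL img)
  also have "\<dots> = (\<Sum>e' \<in> E T \<union> L T. if adjacent T a e' \<and> bG e' then 1 else 0)"
  proof (rule sum.cong)
    fix e' assume e': "e' \<in> E T \<union> L T"
    show "(\<Sum>x \<in> Ef e'. if w x = 2 then inc G v x else 0) = (if adjacent T a e' \<and> bG e' then 1 else 0)"
    proof (cases "adjacent T a e'")
      case False
      have "\<forall>x \<in> Ef e'. inc G v x = 0"
      proof
        fix x assume "x \<in> Ef e'"
        then have x: "x \<in> E G \<union> L G" "pE x = e'" unfolding Ef_def by auto
        show "inc G v x = 0" using inc_adj[OF v x(1)] x(2) False unfolding a_def by auto
      qed
      then have "(\<Sum>x \<in> Ef e'. if w x = 2 then inc G v x else 0) = 0" by (intro sum.neutral) auto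
      then show ?thesis using False by simp
    next
      case True
      show ?thesis
      proof (cases "bG e'")
        case True
        then obtain x where x: "Ef e' = {x}" "w x = 2" using Ef_branched e' by blast
        have xx: "x \<in> Ef e'" using x by simp
        then have x1: "x \<in> E G \<union> L G" "pE x = e'" unfolding Ef_def by auto
        have fa: "Fib a = {endo x a}" using branched_single[OF aV e' \<open>adjacent T a e'\<close> xx x(2)] .
        have "v \<in> Fib a" unfolding Fib_def a_def using v by simp
        then have "endo x a = v" using fa by simp
        then have "inc G v x = 1" using inc_endo[OF x1(1)] \<open>adjacent T a e'\<close> x1(2) v unfolding a_def by auto
        then show ?thesis using x True \<open>adjacent T a e'\<close> by simp
      next
        case False
        then have "\<forall>x \<in> Ef e'. w x \<noteq> 2" unfolding bG_def by auto
        then show ?thesis using False by simp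
      qed
    qed
  qed simp
  also have "\<dots> = rG a" unfolding rG_def using card_filter[of "E T \<union> L T"] finE finL by simp
  finally show ?thesis unfolding a_def .
qed

lemma RH_info:
  assumes v: "v \<in> V G"
  shows "(card (Fib (pV v)) = 1 \<longleftrightarrow> rG (pV v) > 0) \<and> even (rG (pV v)) \<and>
         int (gen G v) * 2 = int (rG (pV v)) - (if rG (pV v) > 0 then 2 else 0)"
proof -
  define a where "a = pV v"
  have aV: "a \<in> V T" using pV_V v unfolding a_def by simp
  obtain e' where e': "e' \<in> E T \<union> L T" "adjacent T a e'" using ex_adj[OF aV] by auto
  have rh: "2 - 2 * int (gen G v) = 2 * int (local_deg G pE w v e') - int (rG a)"
    using rhG[OF v e'(1)] e'(2) rsum[OF v] unfolding a_def by simp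
  have vF: "v \<in> Fib a" using v unfolding Fib_def a_def by simp
  show ?thesis
  proof (cases "\<exists>u. Fib a = {u} \<and> local_deg G pE w u e' = 2")
    case True
    then obtain u where u: "Fib a = {u}" "local_deg G pE w u e' = 2" by auto
    then have "u = v" using vF by auto
    then have "int (rG a) = 2 + 2 * int (gen G v)" using rh u by simp
    then have "rG a = 2 + 2 * gen G v" by linarith
    then show ?thesis using u unfolding a_def[symmetric] by (auto simp: even_add)
  next
    case False
    then obtain v1 v2 where vv: "v1 \<noteq> v2" "Fib a = {v1, v2}" "local_deg G pE w v1 e' = 1" "local_deg G pE w v2 e' = 1"
      using fib_cases[OF aV e'] by blast
    then have "local_deg G pE w v e' = 1" using vF by auto
    then have r: "int (rG a) = 2 * int (gen G v)" using rh by simp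
    have r0: "rG a = 0"
    proof (rule ccontr)
      assume "rG a \<noteq> 0"
      then have "{e' \<in> E T \<union> L T. adjacent T a e' \<and> bG e'} \<noteq> {}" unfolding rG_def by (metis card.empty)
      then obtain f where "f \<in> {e' \<in> E T \<union> L T. adjacent T a e' \<and> bG e'}" by blast
      then have f: "f \<in> E T \<union> L T" "adjacent T a f" "bG f" by auto
      then obtain x where x: "Ef f = {x}" "w x = 2" using Ef_branched by blast
      have "Fib a = {endo x a}" using branched_single[OF aV f(1) f(2)] x by simp
      then show False using vv by auto
    qed
    then show ?thesis using r vv unfolding a_def[symmetric] by simp
  qed
qed

lemma rG_split: "a \<in> V T \<Longrightarrow> rG a = card {e \<in> E T. adjacent T a e \<and> bG e} + nl a"
proof -
  assume a: "a \<in> V T"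
  have "{e' \<in> E T \<union> L T. adjacent T a e' \<and> bG e'} =
        {e \<in> E T. adjacent T a e \<and> bG e} \<union> {l \<in> L T. fst (ends T l) = a}"
    using brl bG_bp adjacent_L by auto
  moreover have "card ({e \<in> E T. adjacent T a e \<and> bG e} \<union> {l \<in> L T. fst (ends T l) = a}) =
        card {e \<in> E T. adjacent T a e \<and> bG e} + card {l \<in> L T. fst (ends T l) = a}"
    by (rule card_Un_disjoint) (use finE finL EL_disj in auto)
  ultimately show ?thesis unfolding rG_def nl_def by simp
qed

lemma rG_even: "a \<in> V T \<Longrightarrow> even (rG a)"
proof -
  assume a: "a \<in> V T"
  then have "a \<in> pV ` V G" using surG unfolding surjective_mor_def by simp
  then obtain v where "v \<in> V G" "pV v = a" by blast
  then show ?thesis using RH_info by blast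
qed

lemma card_symdiff: "finite X \<Longrightarrow> finite Y \<Longrightarrow> card (X - Y) + card (Y - X) + 2 * card (X \<inter> Y) = card X + card Y"
proof -
  assume f: "finite X" "finite Y"
  have "card X = card (X - Y) + card (X \<inter> Y)" using f by (metis Diff_Diff_Int card_Diff_subset_Int card_mono Diff_subset Int_lower1 add.commute le_add_diff_inverse finite_Int)
  moreover have "card Y = card (Y - X) + card (X \<inter> Y)" using f by (metis Diff_Diff_Int Int_commute card_Diff_subset_Int card_mono Diff_subset Int_lower1 add.commute le_add_diff_inverse finite_Int)
  ultimately show ?thesis by simp
qed

lemma bG_eq: "e \<in> E T \<Longrightarrow> bG e = brE e"
proof (rule ccontr)
  assume e0: "e \<in> E T" "bG e \<noteq> brE e"
  define Dl where "Dl = {e \<in> E T. bG e \<noteq> brE e}"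
  have finDl: "finite Dl" unfolding Dl_def using finE by simp
  have neDl: "Dl \<noteq> {}" using e0 unfolding Dl_def by auto
  define m where "m = Max ((\<lambda>e. dist (child e)) ` Dl)"
  have "m \<in> (\<lambda>e. dist (child e)) ` Dl" unfolding m_def using finDl neDl by (intro Max_in) auto
  then obtain e1 where e1: "e1 \<in> Dl" "dist (child e1) = m" by force
  have maxm: "\<And>e. e \<in> Dl \<Longrightarrow> dist (child e) \<le> m" using finDl unfolding m_def by simp
  have e1E: "e1 \<in> E T" using e1 unfolding Dl_def by simp
  define c where "c = child e1"
  have cV: "c \<in> V T" "c \<noteq> \<rho>" "pe c = e1" using child[OF e1E] unfolding c_def by auto
  define X where "X = {e \<in> E T. adjacent T c e \<and> bG e}"
  define Y where "Y = {e \<in> E T. adjacent T c e \<and> brE e}"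
  have evX: "even (card X + nl c)" using rG_even[OF cV(1)] rG_split[OF cV(1)]
    unfolding X_def by simp
  have evY: "even (card Y + nl c)" using rr_even[OF evL cV(1)]
    unfolding Y_def rr_def by simp
  have sd: "(X - Y) \<union> (Y - X) = {e1}"
  proof
    show "{e1} \<subseteq> (X - Y) \<union> (Y - X)"
      using e1 cV adjacent_E[OF e1E] unfolding X_def Y_def Dl_def c_def by auto
    show "(X - Y) \<union> (Y - X) \<subseteq> {e1}"
    proof
      fix f assume f: "f \<in> (X - Y) \<union> (Y - X)"
      then have fE: "f \<in> E T" and fa: "adjacent T c f" and fD: "f \<in> Dl" unfolding X_def Y_def Dl_def by auto
      have "f \<in> (if c = \<rho> then {} else {pe c}) \<union> pe ` children c" using edges_at[OF cV(1)] fE fa by blast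
      then show "f \<in> {e1}"
      proof
        assume "f \<in> (if c = \<rho> then {} else {pe c})" then show ?thesis using cV by simp
      next
        assume "f \<in> pe ` children c"
        then obtain c' where c': "c' \<in> children c" "f = pe c'" by auto
        then have "child f = c'" using child_pe unfolding children_def by auto
        then have "dist (child f) = m + 1" using dist_child[OF c'(1)] e1(2) unfolding c_def by simp
        then show ?thesis using maxm[OF fD] by simp
      qed
    qed
  qed
  have "card ((X - Y) \<union> (Y - X)) = card (X - Y) + card (Y - X)"
    by (rule card_Un_disjoint) (auto simp: X_def Y_def finE)
  then have "card (X - Y) + card (Y - X) = 1" using sd by simp
  moreover have "card (X - Y) + card (Y - X) + 2 * card (X \<inter> Y) = card X + card Y"
    by (rule card_symdiff) (auto simp: X_def Y_def finE)
  ultimately show False using evX evY by presburger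
qed

lemma rG_rr: "a \<in> V T \<Longrightarrow> rG a = rr a"
  unfolding rr_def using rG_split bG_eq by (metis (no_types, lifting) Collect_cong)

lemma fib_br: "a \<in> V T \<Longrightarrow> br a \<Longrightarrow> \<exists>v. Fib a = {v}"
proof -
  assume a: "a \<in> V T" "br a"
  have "a \<in> pV ` V G" using a surG unfolding surjective_mor_def by simp
  then obtain v where v: "v \<in> V G" "pV v = a" by blast
  then have "card (Fib a) = 1" using RH_info[OF v(1)] rG_rr[OF a(1)] a(2) unfolding br_def by simp
  then show ?thesis by (simp add: card_1_singleton_iff)
qed

lemma fib_nbr: "a \<in> V T \<Longrightarrow> \<not> br a \<Longrightarrow> \<exists>v1 v2. v1 \<noteq> v2 \<and> Fib a = {v1, v2}"
proof -
  assume a: "a \<in> V T" "\<not> br a"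
  have "a \<in> pV ` V G" using a surG unfolding surjective_mor_def by simp
  then obtain v where v: "v \<in> V G" "pV v = a" by blast
  then have "card (Fib a) \<noteq> 1" using RH_info[OF v(1)] rG_rr[OF a(1)] a(2) unfolding br_def by simp
  moreover obtain e' where e': "e' \<in> E T \<union> L T" "adjacent T a e'" using ex_adj[OF a(1)] by auto
  ultimately show ?thesis using fib_cases[OF a(1) e'] by auto
qed

lemma gen_G: "v \<in> V G \<Longrightarrow> gen G v = (rr (pV v) - 2) div 2"
proof -
  assume v: "v \<in> V G"
  have aV: "pV v \<in> V T" using pV_V v by simp
  have h: "int (gen G v) * 2 = int (rr (pV v)) - (if rr (pV v) > 0 then 2 else 0)"
    using RH_info[OF v] rG_rr[OF aV] by simp
  show ?thesis
  proof (cases "rr (pV v) > 0")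
    case True
    then have "br (pV v)" unfolding br_def by simp
    then have "int ((rr (pV v) - 2) div 2) * 2 = int (rr (pV v)) - 2" using rr_half aV by blast
    then show ?thesis using h True by simp
  next
    case False
    then show ?thesis using h by simp
  qed
qed

lemma Ef_brE: "e' \<in> E T \<Longrightarrow> brE e' \<Longrightarrow> \<exists>x. Ef e' = {x} \<and> w x = 2"
  using Ef_branched bG_eq by blast

lemma Ef_nbrE: "e' \<in> E T \<Longrightarrow> \<not> brE e' \<Longrightarrow> \<exists>x y. x \<noteq> y \<and> Ef e' = {x, y} \<and> w x = 1 \<and> w y = 1"
proof -
  assume e: "e' \<in> E T" "\<not> brE e'"
  then have "\<not> bG e'" using bG_eq by simp
  then show ?thesis using Ef_cases[of e'] e unfolding bG_def by auto
qed

lemma Ef_leg: "l \<in> L T \<Longrightarrow> \<exists>x. Ef l = {x} \<and> w x = 2"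
  using Ef_branched brl bG_bp by blast

end

lemma sum1:
  fixes f :: "'a \<Rightarrow> nat"
  assumes fin: "finite A" and pos: "\<forall>x\<in>A. f x > 0" and s: "(\<Sum>x\<in>A. f x) = 1"
  shows "\<exists>x. A = {x}"
proof -
  have "A \<noteq> {}" using s by auto
  then obtain x where x: "x \<in> A" by auto
  have s1: "f x + (\<Sum>z\<in>A - {x}. f z) = 1" using s x fin by (simp add: sum.remove)
  have "f x > 0" using pos x by auto
  then have s2: "(\<Sum>z\<in>A - {x}. f z) = 0" using s1 by simp
  have "A - {x} = {}"
  proof (rule ccontr)
    assume "A - {x} \<noteq> {}"
    then obtain z where z: "z \<in> A - {x}" by auto
    then have "f z > 0" using pos by auto
    moreover have "f z \<le> (\<Sum>z\<in>A - {x}. f z)" using z fin by (intro member_le_sum) auto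
    ultimately show False using s2 by simp
  qed
  then show ?thesis using x by auto
qed

context coverL
begin

lemma Ef_E: "e' \<in> E T \<Longrightarrow> Ef e' \<subseteq> E G"
proof
  fix x assume e': "e' \<in> E T" and x: "x \<in> Ef e'"
  then have x1: "x \<in> E G \<union> L G" "pE x = e'" unfolding Ef_def by auto
  show "x \<in> E G"
  proof (rule ccontr)
    assume "x \<notin> E G"
    then have "x \<in> L G" using x1 by simp
    then have "e' \<in> L T" using mor_L x1 by auto
    then show False using e' EL_disj by auto
  qed
qed

lemma Ef_L: "l \<in> L T \<Longrightarrow> Ef l \<subseteq> L G"
proof
  fix x assume l: "l \<in> L T" and x: "x \<in> Ef l"
  then have x1: "x \<in> E G \<union> L G" "pE x = l" unfolding Ef_def by auto
  show "x \<in> L G"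
  proof (rule ccontr)
    assume "x \<notin> L G"
    then have "x \<in> E G" using x1 by simp
    then have "l \<in> E T" using mor_E x1 by auto
    then show False using l EL_disj by auto
  qed
qed

lemma uniq_end:
  assumes a: "a \<in> V T" and nb: "\<not> br a" and e': "e' \<in> E T \<union> L T" and adj: "adjacent T a e'"
    and v: "v \<in> Fib a"
  shows "\<exists>x. {x \<in> Ef e'. endo x a = v} = {x}"
proof -
  have vV: "v \<in> V G" "pV v = a" using v unfolding Fib_def by auto
  have ld1: "local_deg G pE w v e' = 1"
  proof -
    obtain v1 v2 where vv: "v1 \<noteq> v2" "Fib a = {v1, v2}" using fib_nbr[OF a nb] by blast
    from fib_cases[OF a e' adj] show ?thesis
    proof (elim disjE exE conjE)
      fix u assume "Fib a = {u}" then show ?thesis using vv by auto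
    next
      fix u1 u2 assume "Fib a = {u1, u2}" "local_deg G pE w u1 e' = 1" "local_deg G pE w u2 e' = 1"
      then show ?thesis using v by auto
    qed
  qed
  have "(\<Sum>x \<in> Ef e'. if endo x a = v then w x else 0) = 1" using ld_Ef[OF vV(1)] adj vV ld1 by simp
  then have "(\<Sum>x \<in> {x \<in> Ef e'. endo x a = v}. w x) = 1" by (simp add: sum.inter_filter finEf)
  then show ?thesis by (rule sum1[rotated 2]) (auto simp: finEf Ef_def w_pos finEG finLG)
qed

lemma end_inj:
  assumes a: "a \<in> V T" and nb: "\<not> br a" and e': "e' \<in> E T \<union> L T" and adj: "adjacent T a e'"
    and x1: "x1 \<in> Ef e'" and x2: "x2 \<in> Ef e'" and eq: "endo x1 a = endo x2 a"
  shows "x1 = x2"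
proof -
  have xx: "x1 \<in> E G \<union> L G" "pE x1 = e'" using x1 unfolding Ef_def by auto
  have "endo x1 a \<in> Fib a" using inc_endo[OF xx(1)] adj xx(2) unfolding Fib_def by auto
  then obtain x where xs: "{x \<in> Ef e'. endo x a = endo x1 a} = {x}" using uniq_end[OF a nb e' adj] by blast
  have "x1 \<in> {x \<in> Ef e'. endo x a = endo x1 a}" "x2 \<in> {x \<in> Ef e'. endo x a = endo x1 a}"
    using x1 x2 eq by auto
  then show ?thesis using xs by auto
qed

lemma endo_in: "x \<in> Ef e' \<Longrightarrow> adjacent T a e' \<Longrightarrow> endo x a \<in> Fib a"
  using inc_endo unfolding Ef_def Fib_def by blast

definition eat :: "'v \<Rightarrow> 'e" where
  "eat v = (SOME x. x \<in> Ef (pe (pV v)) \<and> endo x (pV v) = v)"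

definition chosen :: "'te \<Rightarrow> 'e" where
  "chosen e' = (SOME x. x \<in> Ef e')"

definition endP :: "'e \<Rightarrow> 'v" where
  "endP x = endo x (par (child (pE x)))"

primrec lam :: "nat \<Rightarrow> 'v \<Rightarrow> bool" where
  "lam 0 v = False"
| "lam (Suc n) v = (if br (pV v) then False else
     (if brE (pE (eat v)) then False else if br (par (child (pE (eat v)))) then eat v = chosen (pE (eat v))
      else lam n (endP (eat v))))"

definition lamv :: "'v \<Rightarrow> bool" where
  "lamv v = lam (dist (pV v)) v"

definition mu :: "'e \<Rightarrow> bool" where
  "mu x = (if x \<in> L G then False else if brE (pE x) then False
           else if br (par (child (pE x))) then x = chosen (pE x) else lamv (endP x))"

lemma lamv_br: "br (pV v) \<Longrightarrow> \<not> lamv v"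
  unfolding lamv_def by (cases "dist (pV v)") auto

lemma eat_props:
  assumes v: "v \<in> V G" and nb: "\<not> br (pV v)"
  shows "eat v \<in> Ef (pe (pV v)) \<and> endo (eat v) (pV v) = v \<and>
         (\<forall>x \<in> Ef (pe (pV v)). endo x (pV v) = v \<longrightarrow> x = eat v)"
proof -
  define a where "a = pV v"
  have aV: "a \<in> V T" using pV_V v unfolding a_def by simp
  have ar: "a \<noteq> \<rho>" using nb br_rho unfolding a_def by auto
  have eE: "pe a \<in> E T" and adj: "adjacent T a (pe a)" using pe_E aV ar adjacent_E child_pe by auto
  have vF: "v \<in> Fib a" using v unfolding Fib_def a_def by simp
  obtain x where x: "{x \<in> Ef (pe a). endo x a = v} = {x}"
    using uniq_end[OF aV nb[folded a_def] _ adj vF] eE by blast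
  then have "eat v = x" unfolding eat_def a_def[symmetric]
    by (metis (mono_tags, lifting) mem_Collect_eq singletonD singletonI someI_ex)
  then show ?thesis using x unfolding a_def by auto
qed

lemma lamv_nbr:
  assumes v: "v \<in> V G" and nb: "\<not> br (pV v)"
  shows "lamv v = mu (eat v)"
proof -
  define a where "a = pV v"
  have aV: "a \<in> V T" using pV_V v unfolding a_def by simp
  have ar: "a \<noteq> \<rho>" using nb br_rho unfolding a_def by auto
  have ep: "eat v \<in> Ef (pe a)" using eat_props[OF v nb] unfolding a_def by simp
  have eE: "pe a \<in> E T" using pe_E aV ar by simp
  have eG: "eat v \<in> E G" "eat v \<notin> L G" using Ef_E[OF eE] ep EL_disjG by auto
  have pe: "pE (eat v) = pe a" using ep unfolding Ef_def by simp
  have ch: "child (pe a) = a" using child_pe aV ar by simp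
  obtain n where n: "dist a = Suc n" using dist0 aV ar by (cases "dist a") auto
  have dp: "dist (par a) = n" using dist_par[OF aV ar] n by simp
  have pv: "pV (endP (eat v)) = par a"
  proof -
    have "adjacent T (par a) (pe a)" using adjacent_E eE ch by simp
    then show ?thesis unfolding endP_def using endo_in[OF ep] pe ch unfolding Fib_def by auto
  qed
  have "lamv v = lam (Suc n) v" unfolding lamv_def a_def[symmetric] using n by simp
  also have "\<dots> = (if brE (pE (eat v)) then False else if br (par (child (pE (eat v)))) then eat v = chosen (pE (eat v))
      else lam n (endP (eat v)))" using nb by simp
  also have "\<dots> = mu (eat v)" unfolding mu_def using eG pe ch dp pv by (simp add: lamv_def)
  finally show ?thesis .
qed

lemma mu_L: "x \<in> L G \<Longrightarrow> \<not> mu x" unfolding mu_def by simp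
lemma mu_brE: "brE (pE x) \<Longrightarrow> \<not> mu x" unfolding mu_def by simp

lemma chosen_in: "e' \<in> E T \<union> L T \<Longrightarrow> chosen e' \<in> Ef e'"
proof -
  assume e': "e' \<in> E T \<union> L T"
  have "Ef e' \<noteq> {}" using Ef_sum[OF e'] by auto
  then show ?thesis unfolding chosen_def by (metis ex_in_conv someI_ex)
qed

lemma mu_nbr_par:
  assumes x: "x \<in> E G" and nb: "\<not> br (par (child (pE x)))" and nbe: "\<not> brE (pE x)"
  shows "mu x = lamv (endP x)"
  using x nb nbe EL_disjG unfolding mu_def by auto

lemma labels_inj: "\<forall>a \<in> V T. dist a = n \<longrightarrow> \<not> br a \<longrightarrow> inj_on lamv (Fib a)"
proof (induction n rule: less_induct)
  case (less n)
  show ?case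
  proof (intro ballI impI)
    fix a assume aV: "a \<in> V T" and dn: "dist a = n" and nb: "\<not> br a"
    have ar: "a \<noteq> \<rho>" using nb br_rho by auto
    have eE: "pe a \<in> E T" using pe_E aV ar by simp
    have ch: "child (pe a) = a" using child_pe aV ar by simp
    have nbe: "\<not> brE (pe a)" using br_adj[OF eE] adjacent_E[OF eE] ch nb by auto
    obtain v1 v2 where vv: "v1 \<noteq> v2" "Fib a = {v1, v2}" using fib_nbr[OF aV nb] by blast
    have v1: "v1 \<in> V G" "pV v1 = a" and v2: "v2 \<in> V G" "pV v2 = a" using vv unfolding Fib_def by auto
    have e1: "eat v1 \<in> Ef (pe a)" "endo (eat v1) a = v1" using eat_props[OF v1(1)] v1 nb by auto
    have e2: "eat v2 \<in> Ef (pe a)" "endo (eat v2) a = v2" using eat_props[OF v2(1)] v2 nb by auto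
    have ne: "eat v1 \<noteq> eat v2" using e1 e2 vv by auto
    obtain x1 x2 where xx: "x1 \<noteq> x2" "Ef (pe a) = {x1, x2}" using Ef_nbrE[OF eE nbe] by blast
    have muinj: "mu x1 \<noteq> mu x2"
    proof (cases "br (par a)")
      case True
      have "chosen (pe a) \<in> {x1, x2}" using chosen_in[of "pe a"] eE xx by auto
      moreover have "\<And>x. x \<in> Ef (pe a) \<Longrightarrow> mu x = (x = chosen (pe a))"
        using Ef_E[OF eE] EL_disjG nbe True ch unfolding mu_def Ef_def by auto
      ultimately show ?thesis using xx by auto
    next
      case False
      have pV_: "par a \<in> V T" using par_V aV by simp
      have adjp: "adjacent T (par a) (pe a)" using adjacent_E[OF eE] ch by simp
      have x1E: "x1 \<in> E G" "x2 \<in> E G" using Ef_E[OF eE] xx by auto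
      have xin: "x1 \<in> Ef (pe a)" "x2 \<in> Ef (pe a)" using xx by auto
      then have pE1: "pE x1 = pe a" "pE x2 = pe a" unfolding Ef_def by auto
      have m1: "mu x1 = lamv (endP x1)" "mu x2 = lamv (endP x2)"
        using mu_nbr_par[OF x1E(1)] mu_nbr_par[OF x1E(2)] False nbe ch pE1 by simp_all
      have pp: "endP x1 = endo x1 (par a)" "endP x2 = endo x2 (par a)" unfolding endP_def using pE1 ch by simp_all
      have inF: "endP x1 \<in> Fib (par a)" "endP x2 \<in> Fib (par a)" using pp endo_in[OF xin(1) adjp] endo_in[OF xin(2) adjp] by simp_all
      have nep: "endP x1 \<noteq> endP x2"
      proof
        assume "endP x1 = endP x2"
        then have "endo x1 (par a) = endo x2 (par a)" using pp by simp
        then have "x1 = x2" using end_inj[OF pV_ False _ adjp xin] eE by simp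
        then show False using xx by simp
      qed
      have "dist (par a) < n" using dist_par[OF aV ar] dn by simp
      then have "inj_on lamv (Fib (par a))" using less.IH pV_ False by blast
      then show ?thesis using m1 inF nep by (auto dest: inj_onD)
    qed
    have "{eat v1, eat v2} = {x1, x2}" using e1 e2 ne xx by (metis doubleton_eq_iff insertE singletonD)
    then have "mu (eat v1) \<noteq> mu (eat v2)" using muinj ne by (metis doubleton_eq_iff)
    then have "lamv v1 \<noteq> lamv v2" using lamv_nbr v1 v2 nb by simp
    then show "inj_on lamv (Fib a)" using vv by (auto simp: inj_on_def)
  qed
qed

lemma lamv_inj: "a \<in> V T \<Longrightarrow> \<not> br a \<Longrightarrow> inj_on lamv (Fib a)"
  using labels_inj by blast

lemma mu_inj:
  assumes eE: "e' \<in> E T" and nbe: "\<not> brE e'"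
  shows "inj_on mu (Ef e')"
proof -
  define c where "c = child e'"
  have cV: "c \<in> V T" "c \<noteq> \<rho>" "pe c = e'" using child[OF eE] unfolding c_def by auto
  obtain x1 x2 where xx: "x1 \<noteq> x2" "Ef e' = {x1, x2}" using Ef_nbrE[OF eE nbe] by blast
  have "mu x1 \<noteq> mu x2"
  proof (cases "br (par c)")
    case True
    have "chosen e' \<in> {x1, x2}" using chosen_in[of e'] eE xx by auto
    moreover have "\<And>x. x \<in> Ef e' \<Longrightarrow> mu x = (x = chosen e')"
      using Ef_E[OF eE] EL_disjG nbe True unfolding mu_def Ef_def c_def by auto
    ultimately show ?thesis using xx by auto
  next
    case False
    have pV_: "par c \<in> V T" using par_V cV by simp
    have adjp: "adjacent T (par c) e'" using adjacent_E[OF eE] unfolding c_def by simp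
    have x1E: "x1 \<in> E G" "x2 \<in> E G" using Ef_E[OF eE] xx by auto
    have xin: "x1 \<in> Ef e'" "x2 \<in> Ef e'" using xx by auto
    then have pE1: "pE x1 = e'" "pE x2 = e'" unfolding Ef_def by auto
    have m1: "mu x1 = lamv (endP x1)" "mu x2 = lamv (endP x2)"
      using mu_nbr_par[OF x1E(1)] mu_nbr_par[OF x1E(2)] False nbe pE1 unfolding c_def by simp_all
    have pp: "endP x1 = endo x1 (par c)" "endP x2 = endo x2 (par c)" unfolding endP_def using pE1 c_def by simp_all
    have inF: "endP x1 \<in> Fib (par c)" "endP x2 \<in> Fib (par c)" using pp endo_in[OF xin(1) adjp] endo_in[OF xin(2) adjp] by simp_all
    have nep: "endP x1 \<noteq> endP x2"
    proof
      assume "endP x1 = endP x2"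
      then have "endo x1 (par c) = endo x2 (par c)" using pp by simp
      then have "x1 = x2" using end_inj[OF pV_ False _ adjp xin] eE by simp
      then show False using xx by simp
    qed
    have "inj_on lamv (Fib (par c))" using lamv_inj pV_ False by blast
    then show ?thesis using m1 inF nep by (auto dest: inj_onD)
  qed
  then show ?thesis using xx by (auto simp: inj_on_def)
qed

end

lemma iso_trans:
  assumes h1: "iso_covers G1 pV1 pE1 w1 G2 pV2 pE2 w2" and h2: "iso_covers G2 pV2 pE2 w2 G3 pV3 pE3 w3"
  shows "iso_covers G1 pV1 pE1 w1 G3 pV3 pE3 w3"
proof -
  obtain fV fE where f: "bij_betw fV (V G1) (V G2)" "bij_betw fE (E G1) (E G2)" "bij_betw fE (L G1) (L G2)"
    "\<forall>e \<in> E G1. {# fV (fst (ends G1 e)), fV (snd (ends G1 e)) #} =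
                     {# fst (ends G2 (fE e)), snd (ends G2 (fE e)) #} \<and> len G2 (fE e) = len G1 e"
    "\<forall>l \<in> L G1. fV (fst (ends G1 l)) = fst (ends G2 (fE l))"
    "\<forall>v \<in> V G1. gen G2 (fV v) = gen G1 v \<and> pV2 (fV v) = pV1 v"
    "\<forall>e \<in> E G1 \<union> L G1. pE2 (fE e) = pE1 e \<and> w2 (fE e) = w1 e"
    using h1 unfolding iso_covers_def by blast
  obtain gV gE where g: "bij_betw gV (V G2) (V G3)" "bij_betw gE (E G2) (E G3)" "bij_betw gE (L G2) (L G3)"
    "\<forall>e \<in> E G2. {# gV (fst (ends G2 e)), gV (snd (ends G2 e)) #} =
                     {# fst (ends G3 (gE e)), snd (ends G3 (gE e)) #} \<and> len G3 (gE e) = len G2 e"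
    "\<forall>l \<in> L G2. gV (fst (ends G2 l)) = fst (ends G3 (gE l))"
    "\<forall>v \<in> V G2. gen G3 (gV v) = gen G2 v \<and> pV3 (gV v) = pV2 v"
    "\<forall>e \<in> E G2 \<union> L G2. pE3 (gE e) = pE2 e \<and> w3 (gE e) = w2 e"
    using h2 unfolding iso_covers_def by blast
  have fEE: "\<And>e. e \<in> E G1 \<Longrightarrow> fE e \<in> E G2" using f(2) bij_betwE by blast
  have fLL: "\<And>e. e \<in> L G1 \<Longrightarrow> fE e \<in> L G2" using f(3) bij_betwE by blast
  have fVV: "\<And>v. v \<in> V G1 \<Longrightarrow> fV v \<in> V G2" using f(1) bij_betwE by blast
  show ?thesis unfolding iso_covers_def
  proof (intro exI[of _ "gV \<circ> fV"] exI[of _ "gE \<circ> fE"] conjI ballI)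
    show "bij_betw (gV \<circ> fV) (V G1) (V G3)" using f(1) g(1) by (rule bij_betw_trans)
    show "bij_betw (gE \<circ> fE) (E G1) (E G3)" using f(2) g(2) by (rule bij_betw_trans)
    show "bij_betw (gE \<circ> fE) (L G1) (L G3)" using f(3) g(3) by (rule bij_betw_trans)
  next
    fix e assume e: "e \<in> E G1"
    have "{# (gV \<circ> fV) (fst (ends G1 e)), (gV \<circ> fV) (snd (ends G1 e)) #} =
          image_mset gV {# fV (fst (ends G1 e)), fV (snd (ends G1 e)) #}" by simp
    also have "\<dots> = image_mset gV {# fst (ends G2 (fE e)), snd (ends G2 (fE e)) #}" using f(4) e by simp
    also have "\<dots> = {# fst (ends G3 (gE (fE e))), snd (ends G3 (gE (fE e))) #}" using g(4) fEE[OF e] by simp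
    finally show "{# (gV \<circ> fV) (fst (ends G1 e)), (gV \<circ> fV) (snd (ends G1 e)) #} =
          {# fst (ends G3 ((gE \<circ> fE) e)), snd (ends G3 ((gE \<circ> fE) e)) #}" by simp
    show "len G3 ((gE \<circ> fE) e) = len G1 e" using f(4) g(4) e fEE[OF e] by simp
  next
    fix l assume l: "l \<in> L G1"
    show "(gV \<circ> fV) (fst (ends G1 l)) = fst (ends G3 ((gE \<circ> fE) l))" using f(5) g(5) l fLL[OF l] by simp
  next
    fix v assume v: "v \<in> V G1"
    show "gen G3 ((gV \<circ> fV) v) = gen G1 v" "pV3 ((gV \<circ> fV) v) = pV1 v" using f(6) g(6) v fVV[OF v] by simp_all
  next
    fix e assume e: "e \<in> E G1 \<union> L G1"
    then have "fE e \<in> E G2 \<union> L G2" using fEE fLL by blast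
    then show "pE3 ((gE \<circ> fE) e) = pE1 e" "w3 ((gE \<circ> fE) e) = w1 e" using f(7) g(7) e by simp_all
  qed
qed

lemma iso_sym:
  assumes m1: "metric_graph G1" and m2: "metric_graph G2" and h: "iso_covers G1 pV1 pE1 w1 G2 pV2 pE2 w2"
  shows "iso_covers G2 pV2 pE2 w2 G1 pV1 pE1 w1"
proof -
  obtain fV fE where f: "bij_betw fV (V G1) (V G2)" "bij_betw fE (E G1) (E G2)" "bij_betw fE (L G1) (L G2)"
    "\<forall>e \<in> E G1. {# fV (fst (ends G1 e)), fV (snd (ends G1 e)) #} =
                     {# fst (ends G2 (fE e)), snd (ends G2 (fE e)) #} \<and> len G2 (fE e) = len G1 e"
    "\<forall>l \<in> L G1. fV (fst (ends G1 l)) = fst (ends G2 (fE l))"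
    "\<forall>v \<in> V G1. gen G2 (fV v) = gen G1 v \<and> pV2 (fV v) = pV1 v"
    "\<forall>e \<in> E G1 \<union> L G1. pE2 (fE e) = pE1 e \<and> w2 (fE e) = w1 e"
    using h unfolding iso_covers_def by blast
  define gV where "gV = inv_into (V G1) fV"
  define gE where "gE = (\<lambda>y. if y \<in> E G2 then inv_into (E G1) fE y else inv_into (L G1) fE y)"
  have disj2: "E G2 \<inter> L G2 = {}" using m2 unfolding metric_graph_def by simp
  have eV1: "\<And>e. e \<in> E G1 \<Longrightarrow> fst (ends G1 e) \<in> V G1 \<and> snd (ends G1 e) \<in> V G1"
    using m1 unfolding metric_graph_def by simp
  have lV1: "\<And>l. l \<in> L G1 \<Longrightarrow> fst (ends G1 l) \<in> V G1" using m1 unfolding metric_graph_def by simp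
  have gVb: "bij_betw gV (V G2) (V G1)" unfolding gV_def using f(1) by (rule bij_betw_inv_into)
  have gVf: "\<And>v. v \<in> V G1 \<Longrightarrow> gV (fV v) = v" unfolding gV_def using f(1) by (simp add: bij_betw_inv_into_left)
  have fgV: "\<And>v. v \<in> V G2 \<Longrightarrow> fV (gV v) = v" unfolding gV_def using f(1) by (simp add: bij_betw_inv_into_right)
  have gEE: "\<And>y. y \<in> E G2 \<Longrightarrow> gE y = inv_into (E G1) fE y" unfolding gE_def by simp
  have gEL: "\<And>y. y \<in> L G2 \<Longrightarrow> gE y = inv_into (L G1) fE y" unfolding gE_def using disj2 by auto
  have gEb: "bij_betw gE (E G2) (E G1)"
    using bij_betw_inv_into[OF f(2)] by (rule bij_betw_cong[THEN iffD1, rotated]) (simp add: gEE)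
  have gLb: "bij_betw gE (L G2) (L G1)"
    using bij_betw_inv_into[OF f(3)] by (rule bij_betw_cong[THEN iffD1, rotated]) (simp add: gEL)
  have fgE: "\<And>y. y \<in> E G2 \<Longrightarrow> fE (gE y) = y \<and> gE y \<in> E G1"
  proof -
    fix y assume y: "y \<in> E G2"
    have "gE y \<in> E G1" using gEb y bij_betwE by blast
    moreover have "fE (gE y) = y" using gEE[OF y] f(2) y by (simp add: bij_betw_inv_into_right)
    ultimately show "fE (gE y) = y \<and> gE y \<in> E G1" by simp
  qed
  have fgL: "\<And>y. y \<in> L G2 \<Longrightarrow> fE (gE y) = y \<and> gE y \<in> L G1"
  proof -
    fix y assume y: "y \<in> L G2"
    have "gE y \<in> L G1" using gLb y bij_betwE by blast
    moreover have "fE (gE y) = y" using gEL[OF y] f(3) y by (simp add: bij_betw_inv_into_right)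
    ultimately show "fE (gE y) = y \<and> gE y \<in> L G1" by simp
  qed
  have gVV: "\<And>v. v \<in> V G2 \<Longrightarrow> gV v \<in> V G1" using gVb bij_betwE by blast
  show ?thesis unfolding iso_covers_def
  proof (intro exI[of _ gV] exI[of _ gE] conjI ballI)
    show "bij_betw gV (V G2) (V G1)" "bij_betw gE (E G2) (E G1)" "bij_betw gE (L G2) (L G1)"
      using gVb gEb gLb by auto
  next
    fix y assume y: "y \<in> E G2"
    define x where "x = gE y"
    have x: "fE x = y" "x \<in> E G1" using fgE[OF y] unfolding x_def by auto
    have "{# gV (fst (ends G2 y)), gV (snd (ends G2 y)) #} = image_mset gV {# fst (ends G2 (fE x)), snd (ends G2 (fE x)) #}"
      using x by simp
    also have "\<dots> = image_mset gV {# fV (fst (ends G1 x)), fV (snd (ends G1 x)) #}" using f(4) x by simp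
    also have "\<dots> = {# fst (ends G1 x), snd (ends G1 x) #}" using gVf eV1[OF x(2)] by simp
    finally show "{# gV (fst (ends G2 y)), gV (snd (ends G2 y)) #} = {# fst (ends G1 (gE y)), snd (ends G1 (gE y)) #}"
      unfolding x_def .
    show "len G1 (gE y) = len G2 y" using f(4) x unfolding x_def by auto
  next
    fix y assume y: "y \<in> L G2"
    define x where "x = gE y"
    have x: "fE x = y" "x \<in> L G1" using fgL[OF y] unfolding x_def by auto
    have "fV (fst (ends G1 x)) = fst (ends G2 y)" using f(5) x by auto
    then have "gV (fst (ends G2 y)) = gV (fV (fst (ends G1 x)))" by simp
    also have "\<dots> = fst (ends G1 x)" using gVf lV1[OF x(2)] by simp
    finally show "gV (fst (ends G2 y)) = fst (ends G1 (gE y))" unfolding x_def .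
  next
    fix v assume v: "v \<in> V G2"
    show "gen G1 (gV v) = gen G2 v" "pV1 (gV v) = pV2 v" using f(6) gVV[OF v] fgV[OF v] by metis+
  next
    fix y assume y: "y \<in> E G2 \<union> L G2"
    then have "fE (gE y) = y \<and> gE y \<in> E G1 \<union> L G1" using fgE fgL by blast
    then show "pE1 (gE y) = pE2 y" "w1 (gE y) = w2 y" using f(7) by metis+
  qed
qed

context coverL
begin

definition fVc :: "'v \<Rightarrow> 'tv \<times> bool" where "fVc v = (pV v, lamv v)"
definition fEc :: "'e \<Rightarrow> 'te \<times> bool" where "fEc x = (pE x, mu x)"

lemma w_wC: "x \<in> E G \<union> L G \<Longrightarrow> wC (fEc x) = w x"
proof -
  assume x: "x \<in> E G \<union> L G"
  have xe: "x \<in> Ef (pE x)" using x unfolding Ef_def by simp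
  show ?thesis
  proof (cases "x \<in> E G")
    case True
    then have eE: "pE x \<in> E T" using mor_E by blast
    show ?thesis
    proof (cases "brE (pE x)")
      case True
      then obtain x0 where "Ef (pE x) = {x0}" "w x0 = 2" using Ef_brE eE by blast
      then show ?thesis using xe True eE unfolding wC_def fEc_def by auto
    next
      case False
      then obtain x1 x2 where "Ef (pE x) = {x1, x2}" "w x1 = 1" "w x2 = 1" using Ef_nbrE eE by blast
      then show ?thesis using xe False eE unfolding wC_def fEc_def by auto
    qed
  next
    case False
    then have xL: "x \<in> L G" using x by simp
    then have lT: "pE x \<in> L T" using mor_L by blast
    then obtain x0 where "Ef (pE x) = {x0}" "w x0 = 2" using Ef_leg by blast
    moreover have "pE x \<notin> E T" using lT EL_disj by auto
    ultimately show ?thesis using xe unfolding wC_def fEc_def by auto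
  qed
qed

lemma endpt_label:
  assumes x: "x \<in> E G" and p: "p = fst (ends G x) \<or> p = snd (ends G x)"
  shows "fVc p = vx (pV p) (mu x)"
proof -
  define a where "a = pV p"
  have pV_: "p \<in> V G" using ends_VG[OF x] p by auto
  have i: "inc G p x > 0" using p x unfolding inc_def by auto
  have ia: "adjacent T a (pE x)" "endo x a = p" using inc_adj[OF pV_ _ i] x unfolding a_def by auto
  have eE: "pE x \<in> E T" using mor_E x by blast
  show ?thesis
  proof (cases "br a")
    case True
    then show ?thesis using lamv_br unfolding fVc_def vx_def a_def by auto
  next
    case False
    have nbe: "\<not> brE (pE x)" using br_adj[OF eE _ ia(1)] False by blast
    define c where "c = child (pE x)"
    have cV: "c \<in> V T" "c \<noteq> \<rho>" "pe c = pE x" using child[OF eE] unfolding c_def by auto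
    have "a = c \<or> a = par c" using adjacent_E[OF eE] ia(1) unfolding c_def by simp
    then have "lamv p = mu x"
    proof
      assume ac: "a = c"
      have xe: "x \<in> Ef (pe (pV p))" using x cV ac unfolding Ef_def a_def by simp
      have "x = eat p" using eat_props[OF pV_] False ia(2) xe unfolding a_def by auto
      then show ?thesis using lamv_nbr[OF pV_] False unfolding a_def by simp
    next
      assume ap: "a = par c"
      have "mu x = lamv (endP x)" using mu_nbr_par[OF x] False nbe ap unfolding c_def by simp
      moreover have "endP x = p" unfolding endP_def using ia(2) ap unfolding c_def by simp
      ultimately show ?thesis by simp
    qed
    then show ?thesis using False unfolding fVc_def vx_def a_def by simp
  qed
qed

lemma bij_V: "bij_betw fVc (V G) (V Cov)"
  unfolding bij_betw_def
proof
  show "inj_on fVc (V G)"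
  proof (rule inj_onI)
    fix v v' assume v: "v \<in> V G" and v': "v' \<in> V G" and eq: "fVc v = fVc v'"
    then have a: "pV v' = pV v" "lamv v = lamv v'" unfolding fVc_def by auto
    define a0 where "a0 = pV v"
    have aV: "a0 \<in> V T" using pV_V v unfolding a0_def by simp
    have inF: "v \<in> Fib a0" "v' \<in> Fib a0" using v v' a unfolding Fib_def a0_def by auto
    show "v = v'"
    proof (cases "br a0")
      case True
      then obtain u where "Fib a0 = {u}" using fib_br aV by blast
      then show ?thesis using inF by auto
    next
      case False
      then show ?thesis using lamv_inj[OF aV False] inF a(2) by (auto dest: inj_onD)
    qed
  qed
  show "fVc ` V G = V Cov"
  proof
    show "fVc ` V G \<subseteq> V Cov"
    proof
      fix y assume "y \<in> fVc ` V G"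
      then obtain v where v: "v \<in> V G" "y = fVc v" by auto
      then show "y \<in> V Cov" using pV_V lamv_br unfolding fVc_def Cov_simps by auto
    qed
  next
    show "V Cov \<subseteq> fVc ` V G"
    proof
      fix y assume y: "y \<in> V Cov"
      obtain a b where ab: "y = (a, b)" by (cases y)
      have aV: "a \<in> V T" and bb: "b \<longrightarrow> \<not> br a" using y ab unfolding Cov_simps by auto
      show "y \<in> fVc ` V G"
      proof (cases "br a")
        case True
        then obtain u where u: "Fib a = {u}" using fib_br aV by blast
        then have "u \<in> V G" "pV u = a" unfolding Fib_def by auto
        moreover have "fVc u = y" using calculation True bb ab lamv_br unfolding fVc_def by auto
        ultimately show ?thesis by (metis image_eqI)
      next
        case False
        obtain v1 v2 where vv: "v1 \<noteq> v2" "Fib a = {v1, v2}" using fib_nbr[OF aV False] by blast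
        have l: "lamv v1 \<noteq> lamv v2" using lamv_inj[OF aV False] vv by (auto dest: inj_onD)
        have v12: "v1 \<in> V G" "pV v1 = a" "v2 \<in> V G" "pV v2 = a" using vv unfolding Fib_def by auto
        have "b = lamv v1 \<or> b = lamv v2" using l by auto
        then show ?thesis
        proof
          assume "b = lamv v1"
          then have "y = fVc v1" using ab v12 unfolding fVc_def by simp
          then show ?thesis by (intro rev_image_eqI[OF v12(1)])
        next
          assume "b = lamv v2"
          then have "y = fVc v2" using ab v12 unfolding fVc_def by simp
          then show ?thesis by (intro rev_image_eqI[OF v12(3)])
        qed
      qed
    qed
  qed
qed

lemma bij_E: "bij_betw fEc (E G) (E Cov)"
  unfolding bij_betw_def
proof
  show "inj_on fEc (E G)"
  proof (rule inj_onI)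
    fix x x' assume x: "x \<in> E G" and x': "x' \<in> E G" and eq: "fEc x = fEc x'"
    then have a: "pE x' = pE x" "mu x = mu x'" unfolding fEc_def by auto
    define e0 where "e0 = pE x"
    have eE: "e0 \<in> E T" using mor_E x unfolding e0_def by blast
    have inF: "x \<in> Ef e0" "x' \<in> Ef e0" using x x' a unfolding Ef_def e0_def by auto
    show "x = x'"
    proof (cases "brE e0")
      case True
      then obtain u where "Ef e0 = {u}" using Ef_brE eE by blast
      then show ?thesis using inF by auto
    next
      case False
      then show ?thesis using mu_inj[OF eE False] inF a(2) by (auto dest: inj_onD)
    qed
  qed
  show "fEc ` E G = E Cov"
  proof
    show "fEc ` E G \<subseteq> E Cov"
    proof
      fix y assume "y \<in> fEc ` E G"
      then obtain x where x: "x \<in> E G" "y = fEc x" by auto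
      then show "y \<in> E Cov" using mor_E mu_brE unfolding fEc_def Cov_simps by auto
    qed
  next
    show "E Cov \<subseteq> fEc ` E G"
    proof
      fix y assume y: "y \<in> E Cov"
      obtain a b where ab: "y = (a, b)" by (cases y)
      have aE: "a \<in> E T" and bb: "b \<longrightarrow> \<not> brE a" using y ab unfolding Cov_simps by auto
      show "y \<in> fEc ` E G"
      proof (cases "brE a")
        case True
        then obtain u where u: "Ef a = {u}" using Ef_brE aE by blast
        then have "u \<in> E G" "pE u = a" using Ef_E[OF aE] unfolding Ef_def by auto
        moreover have "fEc u = y" using calculation True bb ab mu_brE unfolding fEc_def by auto
        ultimately show ?thesis by (metis image_eqI)
      next
        case False
        obtain v1 v2 where vv: "v1 \<noteq> v2" "Ef a = {v1, v2}" using Ef_nbrE[OF aE False] by blast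
        have l: "mu v1 \<noteq> mu v2" using mu_inj[OF aE False] vv by (auto dest: inj_onD)
        have v12: "v1 \<in> E G" "pE v1 = a" "v2 \<in> E G" "pE v2 = a" using vv Ef_E[OF aE] unfolding Ef_def by auto
        have "b = mu v1 \<or> b = mu v2" using l by auto
        then show ?thesis
        proof
          assume "b = mu v1"
          then have "y = fEc v1" using ab v12 unfolding fEc_def by simp
          then show ?thesis by (intro rev_image_eqI[OF v12(1)])
        next
          assume "b = mu v2"
          then have "y = fEc v2" using ab v12 unfolding fEc_def by simp
          then show ?thesis by (intro rev_image_eqI[OF v12(3)])
        qed
      qed
    qed
  qed
qed

lemma bij_L: "bij_betw fEc (L G) (L Cov)"
  unfolding bij_betw_def
proof
  show "inj_on fEc (L G)"
  proof (rule inj_onI)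
    fix x x' assume x: "x \<in> L G" and x': "x' \<in> L G" and eq: "fEc x = fEc x'"
    then have a: "pE x' = pE x" unfolding fEc_def by auto
    have lT: "pE x \<in> L T" using mor_L x by blast
    have inF: "x \<in> Ef (pE x)" "x' \<in> Ef (pE x)" using x x' a unfolding Ef_def by auto
    obtain u where "Ef (pE x) = {u}" using Ef_leg lT by blast
    then show "x = x'" using inF by auto
  qed
  show "fEc ` L G = L Cov"
  proof
    show "fEc ` L G \<subseteq> L Cov"
    proof
      fix y assume "y \<in> fEc ` L G"
      then obtain x where x: "x \<in> L G" "y = fEc x" by auto
      then show "y \<in> L Cov" using mor_L mu_L unfolding fEc_def Cov_simps by auto
    qed
  next
    show "L Cov \<subseteq> fEc ` L G"
    proof
      fix y assume y: "y \<in> L Cov"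
      obtain a b where ab: "y = (a, b)" by (cases y)
      have aL: "a \<in> L T" and bb: "\<not> b" using y ab unfolding Cov_simps by auto
      obtain u where u: "Ef a = {u}" using Ef_leg aL by blast
      then have "u \<in> L G" "pE u = a" using Ef_L[OF aL] unfolding Ef_def by auto
      moreover have "fEc u = y" using calculation bb ab mu_L unfolding fEc_def by auto
      ultimately show "y \<in> fEc ` L G" by (metis image_eqI)
    qed
  qed
qed

lemma iso_Cov: "iso_covers G pV pE w Cov fst fst wC"
  unfolding iso_covers_def
proof (intro exI[of _ fVc] exI[of _ fEc] conjI ballI)
  show "bij_betw fVc (V G) (V Cov)" "bij_betw fEc (E G) (E Cov)" "bij_betw fEc (L G) (L Cov)"
    using bij_V bij_E bij_L by auto
next
  fix x assume x: "x \<in> E G"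
  have m: "pE x \<in> E T" "w x > 0"
    "{# pV (fst (ends G x)), pV (snd (ends G x)) #} = {# fst (ends T (pE x)), snd (ends T (pE x)) #}"
    "len T (pE x) = real (w x) * len G x" using mor_E[OF x] by auto
  have f1: "fVc (fst (ends G x)) = vx (pV (fst (ends G x))) (mu x)" using endpt_label[OF x] by simp
  have f2: "fVc (snd (ends G x)) = vx (pV (snd (ends G x))) (mu x)" using endpt_label[OF x] by simp
  have ec: "ends Cov (fEc x) = (vx (fst (ends T (pE x))) (mu x), vx (snd (ends T (pE x))) (mu x))"
    unfolding fEc_def by simp
  show "{# fVc (fst (ends G x)), fVc (snd (ends G x)) #} = {# fst (ends Cov (fEc x)), snd (ends Cov (fEc x)) #}"
    unfolding f1 f2 ec using mset2[OF m(3)] by auto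
  have "wC (fEc x) = w x" using w_wC x by simp
  then show "len Cov (fEc x) = len G x" unfolding Cov_simps using m(2) m(4) unfolding fEc_def by simp
next
  fix x assume x: "x \<in> L G"
  have m: "pE x \<in> L T" "pV (fst (ends G x)) = fst (ends T (pE x))" using mor_L[OF x] by auto
  have b: "br (pV (fst (ends G x)))" using br_leg[OF m(1)] m(2) by simp
  show "fVc (fst (ends G x)) = fst (ends Cov (fEc x))"
    unfolding fEc_def fVc_def using m b lamv_br mu_L[OF x] by (simp add: vx_def)
next
  fix v assume v: "v \<in> V G"
  show "gen Cov (fVc v) = gen G v" "fst (fVc v) = pV v" unfolding fVc_def using gen_G[OF v] Cov_simps(6) by simp_all
next
  fix x assume x: "x \<in> E G \<union> L G"
  show "fst (fEc x) = pE x" "wC (fEc x) = w x" using w_wC[OF x] unfolding fEc_def by simp_all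
qed

end

theorem proposition4p7:
  fixes T :: "('tv, 'te) mgraph"
  assumes "genus0_tree T"
    and "card (L T) = 6"
    and "\<forall>v \<in> V T. gen T v = 0"
  shows "(\<exists>(G :: (nat, nat) mgraph) pV pE w. genus2_cover_branched_at_legs G T pV pE w) \<and>
         (\<forall>(G1 :: ('v1, 'e1) mgraph) pV1 pE1 w1 (G2 :: ('v2, 'e2) mgraph) pV2 pE2 w2.
            genus2_cover_branched_at_legs G1 T pV1 pE1 w1 \<longrightarrow>
            genus2_cover_branched_at_legs G2 T pV2 pE2 w2 \<longrightarrow>
            iso_covers G1 pV1 pE1 w1 G2 pV2 pE2 w2)"
proof -
  have gt: "genus0_tree T" using assms(1) .
  have "L T \<noteq> {}" using assms(2) by auto
  then obtain l0 where l0: "l0 \<in> L T" by auto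
  define \<rho> where "\<rho> = fst (ends T l0)"
  have mg: "metric_graph T" using gt unfolding genus0_tree_def by simp
  have rho: "\<rho> \<in> V T" using mg l0 unfolding metric_graph_def \<rho>_def by simp
  have t1: "tree1 T \<rho>"
    unfolding tree1_def tree1_axioms_def tree0_def using gt rho l0 assms(2) \<rho>_def by auto
  interpret t: tree1 T \<rho> by (rule t1)
  have ex: "genus2_cover_branched_at_legs t.Cov T fst fst t.wC"
    unfolding genus2_cover_branched_at_legs_def
    using t.hyp_Cov t.genus_Cov t.cardL_Cov t.branch_Cov assms(2) by simp
  have part1: "\<exists>(G :: (nat, nat) mgraph) pV pE w. genus2_cover_branched_at_legs G T pV pE w"
    by (rule relabel_nat[OF ex])
  have part2: "\<forall>(G1 :: ('v1, 'e1) mgraph) pV1 pE1 w1 (G2 :: ('v2, 'e2) mgraph) pV2 pE2 w2.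
            genus2_cover_branched_at_legs G1 T pV1 pE1 w1 \<longrightarrow>
            genus2_cover_branched_at_legs G2 T pV2 pE2 w2 \<longrightarrow>
            iso_covers G1 pV1 pE1 w1 G2 pV2 pE2 w2"
  proof (intro allI impI)
    fix G1 :: "('v1, 'e1) mgraph" and pV1 pE1 w1 and G2 :: "('v2, 'e2) mgraph" and pV2 pE2 w2
    assume h1: "genus2_cover_branched_at_legs G1 T pV1 pE1 w1"
      and h2: "genus2_cover_branched_at_legs G2 T pV2 pE2 w2"
    have c1: "coverL T \<rho> G1 pV1 pE1 w1"
      unfolding coverL_def coverL_axioms_def using t1 h1 unfolding genus2_cover_branched_at_legs_def by simp
    have c2: "coverL T \<rho> G2 pV2 pE2 w2"
      unfolding coverL_def coverL_axioms_def using t1 h2 unfolding genus2_cover_branched_at_legs_def by simp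
    have i1: "iso_covers G1 pV1 pE1 w1 t.Cov fst fst t.wC" using coverL.iso_Cov[OF c1] .
    have i2: "iso_covers G2 pV2 pE2 w2 t.Cov fst fst t.wC" using coverL.iso_Cov[OF c2] .
    have m2: "metric_graph G2" using h2 unfolding genus2_cover_branched_at_legs_def hyperelliptic_cover_def by simp
    have i2': "iso_covers t.Cov fst fst t.wC G2 pV2 pE2 w2" using iso_sym[OF m2 t.mg_Cov i2] .
    show "iso_covers G1 pV1 pE1 w1 G2 pV2 pE2 w2" using iso_trans[OF i1 i2'] .
  qed
  show ?thesis using part1 part2 by blast
qed

end
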